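(* Let $N\in\mathbb N$ (with $N\ge2$ when $R_N=D_N$), $r>0$, $0<t_\ast<\infty$ and $t\in(0,t_\ast)$. With $q^{R_N}_t(\mathbf x)=\det_{1\le j,k\le N}[\overline{M^{R_N}_j(x_k,t_\ast-t)}]\det_{1\le\ell,m\le N}[M^{R_N}_\ell(x_m,t)]$, \[ \int_{\mathbb W_N^{[0,2\pi r)}}q^{A_N}_t(\mathbf x)\,d\mathbf x=\prod_{n=1}^N m^{A_N}_n(t_\ast),\qquad \int_{\mathbb W_N^{[0,\pi r]}}q^{R_N}_t(\mathbf x)\,d\mathbf x=\prod_{n=1}^N m^{R_N}_n(t_\ast) \] for $R_N\in\{B_N,B_N^\vee,C_N,C_N^\vee,BC_N,D_N\}$, where $\mathbb W_N^{[0,2\pi r)}=\{\mathbf x\in\mathbb R^N:0\le x_1<\dots<x_N<2\pi r\}$ and $\mathbb W_N^{[0,\pi r]}=\{\mathbf x\in\mathbb R^N:0\le x_1<\dots<x_N\le\pi r\}$.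
   Context: Jacobi theta functions: for $v\in\mathbb C$, $\tau\in\mathbb H=\{\Im\tau>0\}$, $z=e^{\pi iv}$, $q=e^{\pi i\tau}$: $\vartheta_1(v;\tau)=i\sum_{n\in\mathbb Z}(-1)^nq^{(n-1/2)^2}z^{2n-1}$, $\vartheta_2(v;\tau)=\sum_{n\in\mathbb Z}q^{(n-1/2)^2}z^{2n-1}$. For $\sigma\in\mathbb R$, $z\in\mathbb C$, $\tau\in\mathbb H$: $\Theta^A(\sigma,z,\tau)=e^{2\pi i\sigma z}\vartheta_2(\sigma\tau+z;\tau)$, $\Theta^B=e^{2\pi i\sigma z}\vartheta_1(\sigma\tau+z;\tau)-e^{-2\pi i\sigma z}\vartheta_1(\sigma\tau-z;\tau)$, $\Theta^C=e^{2\pi i\sigma z}\vartheta_2(\sigma\tau+z;\tau)-e^{-2\pi i\sigma z}\vartheta_2(\sigma\tau-z;\tau)$, $\Theta^D=e^{2\pi i\sigma z}\vartheta_2(\sigma\tau+z;\tau)+e^{-2\pi i\sigma z}\vartheta_2(\sigma\tau-z;\tau)$. Types $R_N\in\{A_N,B_N,B_N^\vee,C_N,C_N^\vee,BC_N,D_N\}$; $\sharp(R_N)=A$ for $A_N$, $B$ for $B_N,B_N^\vee$, $C$ for $C_N,C_N^\vee,BC_N$, $D$ for $D_N$; $J^{R_N}(j)=j-1/2$ for $A_N,C_N^\vee$, $j-1$ for $B_N,B_N^\vee,D_N$, $j$ for $C_N,BC_N$; $\mathcal N^{A_N}=N$, $\mathcal N^{B_N}=2N-1$, $\mathcal N^{B_N^\vee}=\mathcal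 N^{C_N^\vee}=2N$, $\mathcal N^{C_N}=2(N+1)$, $\mathcal N^{BC_N}=2N+1$, $\mathcal N^{D_N}=2(N-1)$. $\xi(x)=x/(2\pi r)$, $\tau(t)=it/(2\pi r^2)$; $M^{R_N}_j(x,t)=\Theta^{\sharp(R_N)}\big(J^{R_N}(j)/\mathcal N^{R_N},\mathcal N^{R_N}\xi(x),(\mathcal N^{R_N})^2\tau(t)\big)$ for $x\in\mathbb R$, $t>0$. Constants: for $R_N\in\{A_N,C_N,C_N^\vee,BC_N\}$, $m^{R_N}_j(t_\ast)=2\pi r\vartheta_2(\mathcal N^{R_N}J^{R_N}(j)\tau(t_\ast);(\mathcal N^{R_N})^2\tau(t_\ast))$; for $R_N\in\{B_N,B_N^\vee\}$, $m_1=4\pi r\vartheta_2(0;(\mathcal N^{R_N})^2\tau(t_\ast))$ and $m_j=2\pi r\vartheta_2(\mathcal N^{R_N}J^{R_N}(j)\tau(t_\ast);(\mathcal N^{R_N})^2\tau(t_\ast))$ for $j\ge2$; for $D_N$, $m_1=4\pi r\vartheta_2(0;(\mathcal N^{D_N})^2\tau(t_\ast))$, $m_j=2\pi r\vartheta_2(\mathcal N^{D_N}J^{D_N}(j)\tau(t_\ast);(\mathcal N^{D_N})^2\tau(t_\ast))$ for $2\le j\le N-1$, $m_N=4\pi r\vartheta_2(\mathcal N^{D_N}(N-1)\tau(t_\ast);(\mathcal N^{D_N})^2\tau(t_\ast))$. *)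

theory Defs
  imports "HOL-Analysis.Analysis" "Jordan_Normal_Form.Determinant"
begin

definition jtheta1 :: "complex \<Rightarrow> complex \<Rightarrow> complex" where
  "jtheta1 v tau = \<i> * (\<Sum>\<^sub>\<infinity> n::int. (-1) ^ nat \<bar>n\<bar> *
      exp (pi * \<i> * tau * (of_int n - 1/2)^2) * exp (pi * \<i> * v * (2 * of_int n - 1)))"

definition jtheta2 :: "complex \<Rightarrow> complex \<Rightarrow> complex" where
  "jtheta2 v tau = (\<Sum>\<^sub>\<infinity> n::int.
      exp (pi * \<i> * tau * (of_int n - 1/2)^2) * exp (pi * \<i> * v * (2 * of_int n - 1)))"

datatype theta_kind = ThA | ThB | ThC | ThD

definition Theta :: "theta_kind \<Rightarrow> real \<Rightarrow> complex \<Rightarrow> complex \<Rightarrow> complex" where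
  "Theta k \<sigma> z tau = (case k of
     ThA \<Rightarrow> exp (2 * pi * \<i> * \<sigma> * z) * jtheta2 (\<sigma> * tau + z) tau
   | ThB \<Rightarrow> exp (2 * pi * \<i> * \<sigma> * z) * jtheta1 (\<sigma> * tau + z) tau
            - exp (- 2 * pi * \<i> * \<sigma> * z) * jtheta1 (\<sigma> * tau - z) tau
   | ThC \<Rightarrow> exp (2 * pi * \<i> * \<sigma> * z) * jtheta2 (\<sigma> * tau + z) tau
            - exp (- 2 * pi * \<i> * \<sigma> * z) * jtheta2 (\<sigma> * tau - z) tau
   | ThD \<Rightarrow> exp (2 * pi * \<i> * \<sigma> * z) * jtheta2 (\<sigma> * tau + z) tau
            + exp (- 2 * pi * \<i> * \<sigma> * z) * jtheta2 (\<sigma> * tau - z) tau)"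

text \<open>A_N, B_N, B_N^vee, C_N, C_N^vee, BC_N, D_N\<close>
datatype rtype = RA | RB | RBv | RC | RCv | RBC | RD

fun sharp :: "rtype \<Rightarrow> theta_kind" where
  "sharp RA = ThA"
| "sharp RB = ThB" | "sharp RBv = ThB"
| "sharp RC = ThC" | "sharp RCv = ThC" | "sharp RBC = ThC"
| "sharp RD = ThD"

fun Jfun :: "rtype \<Rightarrow> nat \<Rightarrow> real" where
  "Jfun RA j = real j - 1/2"
| "Jfun RCv j = real j - 1/2"
| "Jfun RB j = real j - 1"
| "Jfun RBv j = real j - 1"
| "Jfun RD j = real j - 1"
| "Jfun RC j = real j"
| "Jfun RBC j = real j"

fun calN :: "rtype \<Rightarrow> nat \<Rightarrow> real" where
  "calN RA N = real N"
| "calN RB N = 2 * real N - 1"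
| "calN RBv N = 2 * real N"
| "calN RCv N = 2 * real N"
| "calN RC N = 2 * (real N + 1)"
| "calN RBC N = 2 * real N + 1"
| "calN RD N = 2 * (real N - 1)"

definition xi :: "real \<Rightarrow> real \<Rightarrow> real" where
  "xi r x = x / (2 * pi * r)"

definition tauf :: "real \<Rightarrow> real \<Rightarrow> complex" where
  "tauf r t = \<i> * t / (2 * pi * r^2)"

definition Mfun :: "rtype \<Rightarrow> nat \<Rightarrow> real \<Rightarrow> nat \<Rightarrow> real \<Rightarrow> real \<Rightarrow> complex" where
  "Mfun R N r j x t = Theta (sharp R) (Jfun R j / calN R N)
      (of_real (calN R N * xi r x)) (of_real ((calN R N)^2) * tauf r t)"

definition mconst :: "rtype \<Rightarrow> nat \<Rightarrow> real \<Rightarrow> nat \<Rightarrow> real \<Rightarrow> complex" where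
  "mconst R N r j ts =
     (let NN = calN R N; tt = of_real (NN^2) * tauf r ts in
      if (R \<in> {RB, RBv, RD} \<and> j = 1) then 4 * pi * r * jtheta2 0 tt
      else if (R = RD \<and> j = N) then 4 * pi * r * jtheta2 (of_real (NN * (real N - 1)) * tauf r ts) tt
      else 2 * pi * r * jtheta2 (of_real (NN * Jfun R j) * tauf r ts) tt)"

text \<open>Points x in R^N are functions nat => real, coordinates x 0, ..., x (N-1)
  standing for x_1, ..., x_N.\<close>
definition weyl_A :: "nat \<Rightarrow> real \<Rightarrow> (nat \<Rightarrow> real) set" where
  "weyl_A N r = {x. 0 \<le> x 0 \<and> (\<forall>k. Suc k < N \<longrightarrow> x k < x (Suc k)) \<and> x (N - 1) < 2 * pi * r}"

definition weyl_half :: "nat \<Rightarrow> real \<Rightarrow> (nat \<Rightarrow> real) set" where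
  "weyl_half N r = {x. 0 \<le> x 0 \<and> (\<forall>k. Suc k < N \<longrightarrow> x k < x (Suc k)) \<and> x (N - 1) \<le> pi * r}"

definition qdens :: "rtype \<Rightarrow> nat \<Rightarrow> real \<Rightarrow> real \<Rightarrow> real \<Rightarrow> (nat \<Rightarrow> real) \<Rightarrow> complex" where
  "qdens R N r ts t x =
     det (mat N N (\<lambda>(j, k). cnj (Mfun R N r (Suc j) (x k) (ts - t))))
   * det (mat N N (\<lambda>(l, m). Mfun R N r (Suc l) (x m) t))"

end

theory Submission
  imports Defs
begin

lemma chain_less:
  fixes a :: "nat \<Rightarrow> real"
  assumes "\<And>k. Suc k < N \<Longrightarrow> a k < a (Suc k)" "i < j" "j < N"
  shows "a i < a j"
  using assms(2,3)
proof (induction j)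
  case 0 then show ?case by simp
next
  case (Suc j)
  show ?case
  proof (cases "i = j")
    case True then show ?thesis using assms(1) Suc by simp
  next
    case False then have "a i < a j" using Suc by simp
    then show ?thesis using assms(1)[of j] Suc by simp
  qed
qed

lemma chain_le:
  fixes a :: "nat \<Rightarrow> real"
  assumes "\<And>k. Suc k < N \<Longrightarrow> a k < a (Suc k)" "i \<le> j" "j < N"
  shows "a i \<le> a j"
  using chain_less[of N a i j] assms by (cases "i = j") auto

lemma sort_perm_exists:
  fixes x :: "nat \<Rightarrow> real"
  assumes inj: "inj_on x {..<N}"
  shows "\<exists>p. p permutes {..<N} \<and> (\<forall>k. Suc k < N \<longrightarrow> x (p k) < x (p (Suc k)))"
proof -
  define X where "X = x ` {..<N}"
  define xs where "xs = sorted_list_of_set X"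
  have finX: "finite X" by (simp add: X_def)
  have cardX: "card X = N" using inj by (simp add: X_def card_image)
  have len: "length xs = N" using cardX finX by (simp add: xs_def)
  have setxs: "set xs = X" using finX by (simp add: xs_def)
  have sw: "sorted_wrt (<) xs" by (simp add: xs_def strict_sorted_list_of_set)
  have dist: "distinct xs" using sw strict_sorted_iff by blast
  define p where "p k = (if k < N then the_inv_into {..<N} x (xs ! k) else k)" for k
  have xsX: "k < N \<Longrightarrow> xs ! k \<in> X" for k using len setxs nth_mem by blast
  have pin: "k < N \<Longrightarrow> p k < N" for k
    using xsX[of k] the_inv_into_into[OF inj, of "xs ! k" "{..<N}"] by (auto simp: p_def X_def)
  have xp: "k < N \<Longrightarrow> x (p k) = xs ! k" for k
    using xsX[of k] f_the_inv_into_f[OF inj, of "xs ! k"] by (auto simp: p_def X_def)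
  have injp: "inj_on p {..<N}"
  proof (rule inj_onI)
    fix a b assume "a \<in> {..<N}" "b \<in> {..<N}" "p a = p b"
    then have "xs ! a = xs ! b" using xp by (metis lessThan_iff)
    then show "a = b" using dist len \<open>a \<in> _\<close> \<open>b \<in> _\<close> nth_eq_iff_index_eq by auto
  qed
  have "p ` {..<N} = {..<N}"
    by (rule endo_inj_surj) (use pin injp in auto)
  then have "bij_betw p {..<N} {..<N}" using injp by (simp add: bij_betw_def)
  then have perm: "p permutes {..<N}"
    by (rule bij_imp_permutes) (simp add: p_def)
  have "\<forall>k. Suc k < N \<longrightarrow> x (p k) < x (p (Suc k))"
    using xp sw len by (auto intro: sorted_wrt_nth_less)
  with perm show ?thesis by blast
qed

lemma sort_perm_unique:
  fixes x :: "nat \<Rightarrow> real"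
  assumes inj: "inj_on x {..<N}"
    and p: "p permutes {..<N}" "\<forall>k. Suc k < N \<longrightarrow> x (p k) < x (p (Suc k))"
    and q: "q permutes {..<N}" "\<forall>k. Suc k < N \<longrightarrow> x (q k) < x (q (Suc k))"
  shows "p = q"
proof -
  define xs where "xs = map (\<lambda>k. x (p k)) [0..<N]"
  define ys where "ys = map (\<lambda>k. x (q k)) [0..<N]"
  have "sorted_wrt (<) xs"
    unfolding sorted_wrt_iff_nth_less xs_def using chain_less[of N "\<lambda>k. x (p k)"] p(2) by auto
  moreover have "sorted_wrt (<) ys"
    unfolding sorted_wrt_iff_nth_less ys_def using chain_less[of N "\<lambda>k. x (q k)"] q(2) by auto
  moreover have "set xs = x ` {..<N}"
    unfolding xs_def using permutes_image[OF p(1)] by (auto simp: image_image[symmetric] atLeast0LessThan simp del: image_image)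
  moreover have "set ys = x ` {..<N}"
    unfolding ys_def using permutes_image[OF q(1)] by (auto simp: image_image[symmetric] atLeast0LessThan simp del: image_image)
  ultimately have "xs = ys" using sorted_distinct_set_unique strict_sorted_iff by metis
  then have "\<And>k. k < N \<Longrightarrow> x (p k) = x (q k)"
    unfolding xs_def ys_def by (metis (no_types, lifting) add_0 diff_zero length_map length_upt nth_map_upt)
  then have "\<And>k. k < N \<Longrightarrow> p k = q k"
    using inj permutes_in_image[OF p(1)] permutes_in_image[OF q(1)] by (meson inj_onD lessThan_iff)
  moreover have "\<And>k. k \<ge> N \<Longrightarrow> p k = q k"
    using permutes_not_in[OF p(1)] permutes_not_in[OF q(1)] by simp
  ultimately show ?thesis by (metis linorder_not_le ext)
qed

definition Qdet :: "nat \<Rightarrow> (nat \<Rightarrow> real \<Rightarrow> complex) \<Rightarrow> (nat \<Rightarrow> real) \<Rightarrow> complex" where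
  "Qdet N f x = det (mat N N (\<lambda>(k, j). f j (x k)))"

lemma Qdet_leibniz:
  "Qdet N f x = (\<Sum>\<sigma>\<in>{\<sigma>. \<sigma> permutes {..<N}}. signof \<sigma> * (\<Prod>k<N. f (\<sigma> k) (x k)))"
  unfolding Qdet_def
  by (subst det_def'[of _ N]) (auto simp: atLeast0LessThan permutes_in_image intro!: sum.cong prod.cong)

lemma Qdet_perm:
  assumes p: "p permutes {..<N}"
  shows "Qdet N f (\<lambda>i\<in>{..<N}. x (p i)) = signof p * Qdet N f x"
proof -
  let ?A = "mat N N (\<lambda>(k, j). f j (x k))"
  have "mat N N (\<lambda>(k, j). f j ((\<lambda>i\<in>{..<N}. x (p i)) k)) = mat N N (\<lambda>(i, j). ?A $$ (p i, j))"
    using permutes_in_image[OF p] by (intro eq_matI) auto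
  moreover have "det (mat N N (\<lambda>(i, j). ?A $$ (p i, j))) = signof p * det ?A"
    by (rule det_permute_rows) (use p in \<open>auto simp: atLeast0LessThan\<close>)
  ultimately show ?thesis unfolding Qdet_def by simp
qed

lemma Qdet_ident:
  assumes "k < N" "k' < N" "k \<noteq> k'" "x k = x k'"
  shows "Qdet N f x = 0"
  unfolding Qdet_def
  by (rule det_identical_rows[of _ N k k']) (use assms in \<open>auto intro!: eq_vecI\<close>)

lemma det_cols_rows:
  "det (mat N N (\<lambda>(j, k). F j k)) = det (mat N N (\<lambda>(k, j). F j k))"
proof -
  have "mat N N (\<lambda>(j, k). F j k) = transpose_mat (mat N N (\<lambda>(k, j). F j k))"
    by (rule eq_matI) auto
  then show ?thesis by (simp add: det_transpose[of _ N])
qed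

lemma signof_sq: "(signof p :: 'a::comm_ring_1) * signof p = 1"
  by (simp add: sign_def)

abbreviation PM :: "nat \<Rightarrow> (nat \<Rightarrow> real) measure" where
  "PM N \<equiv> PiM {..<N} (\<lambda>_. lborel)"

lemma Tp_measurable:
  assumes p: "p permutes {..<N}"
  shows "(\<lambda>x. \<lambda>i\<in>{..<N}. x (p i)) \<in> PM N \<rightarrow>\<^sub>M PM N"
  by (rule measurable_restrict) (use permutes_in_image[OF p] in \<open>auto intro!: measurable_component_singleton\<close>)

lemma PM_reindex:
  assumes p: "p permutes {..<N}"
  shows "distr (PM N) (PM N) (\<lambda>x. \<lambda>i\<in>{..<N}. x (p i)) = PM N"
proof -
  interpret product_sigma_finite "\<lambda>_::nat. lborel::real measure" by standard
  show ?thesis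
  proof (rule PiM_eqI)
    fix A assume A: "\<And>i. i \<in> {..<N} \<Longrightarrow> A i \<in> sets (lborel::real measure)"
    have pre: "(\<lambda>x. \<lambda>i\<in>{..<N}. x (p i)) -` Pi\<^sub>E {..<N} A \<inter> space (PM N) = Pi\<^sub>E {..<N} (\<lambda>j. A (Hilbert_Choice.inv p j))"
    proof (intro equalityI subsetI)
      fix x assume "x \<in> (\<lambda>x. \<lambda>i\<in>{..<N}. x (p i)) -` Pi\<^sub>E {..<N} A \<inter> space (PM N)"
      then have x: "x \<in> space (PM N)" "(\<lambda>i\<in>{..<N}. x (p i)) \<in> Pi\<^sub>E {..<N} A" by auto
      show "x \<in> Pi\<^sub>E {..<N} (\<lambda>j. A (Hilbert_Choice.inv p j))"
      proof (rule PiE_I)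
        fix j assume j: "j \<in> {..<N}"
        have "Hilbert_Choice.inv p j \<in> {..<N}" using j permutes_in_image[OF permutes_inv[OF p]] by auto
        then have "x (p (Hilbert_Choice.inv p j)) \<in> A (Hilbert_Choice.inv p j)" using x(2) by (auto simp: PiE_iff)
        then show "x j \<in> A (Hilbert_Choice.inv p j)" by (simp add: permutes_inverses(1)[OF p])
      next
        fix j assume "j \<notin> {..<N}" then show "x j = undefined" using x(1) by (auto simp: space_PiM PiE_iff extensional_def)
      qed
    next
      fix x assume x: "x \<in> Pi\<^sub>E {..<N} (\<lambda>j. A (Hilbert_Choice.inv p j))"
      have "x \<in> space (PM N)" using x A[THEN sets.sets_into_space] by (auto simp: space_PiM PiE_iff)
      moreover have "(\<lambda>i\<in>{..<N}. x (p i)) \<in> Pi\<^sub>E {..<N} A"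
      proof (rule PiE_I)
        fix i assume i: "i \<in> {..<N}"
        have "p i \<in> {..<N}" using i permutes_in_image[OF p] by auto
        then have "x (p i) \<in> A (Hilbert_Choice.inv p (p i))" using x by (auto simp: PiE_iff)
        then show "(\<lambda>i\<in>{..<N}. x (p i)) i \<in> A i" using i by (simp add: permutes_inverses(2)[OF p])
      qed auto
      ultimately show "x \<in> (\<lambda>x. \<lambda>i\<in>{..<N}. x (p i)) -` Pi\<^sub>E {..<N} A \<inter> space (PM N)" by auto
    qed
    have "emeasure (distr (PM N) (PM N) (\<lambda>x. \<lambda>i\<in>{..<N}. x (p i))) (Pi\<^sub>E {..<N} A)
        = emeasure (PM N) (Pi\<^sub>E {..<N} (\<lambda>j. A (Hilbert_Choice.inv p j)))"
      using A by (subst emeasure_distr[OF Tp_measurable[OF p]]) (auto simp: pre intro!: sets_PiM_I_finite)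
    also have "\<dots> = (\<Prod>j<N. emeasure lborel (A (Hilbert_Choice.inv p j)))"
      using A permutes_in_image[OF permutes_inv[OF p]] by (subst emeasure_PiM) auto
    also have "\<dots> = (\<Prod>i<N. emeasure lborel (A i))"
      using prod.permute[OF permutes_inv[OF p], of "\<lambda>i. emeasure lborel (A i)"] by (simp add: comp_def)
    finally show "emeasure (distr (PM N) (PM N) (\<lambda>x. \<lambda>i\<in>{..<N}. x (p i))) (Pi\<^sub>E {..<N} A) = (\<Prod>i<N. emeasure lborel (A i))" .
  qed auto
qed

lemma perm_lt: "p permutes {..<N} \<Longrightarrow> k < N \<Longrightarrow> p k < N"
  using permutes_in_image[of p "{..<N}" k] by simp

lemma perm_diag_sum:
  fixes G :: "nat \<Rightarrow> nat \<Rightarrow> complex"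
  assumes orth: "\<And>a b. a < N \<Longrightarrow> b < N \<Longrightarrow> a \<noteq> b \<Longrightarrow> G a b = 0"
  shows "(\<Sum>\<sigma>\<in>{\<sigma>. \<sigma> permutes {..<N}}. \<Sum>\<pi>\<in>{\<sigma>. \<sigma> permutes {..<N}}. signof \<sigma> * signof \<pi> * (\<Prod>k<N. G (\<sigma> k) (\<pi> k)))
         = fact N * (\<Prod>j<N. G j j)"
proof -
  let ?Perm = "{\<sigma>. \<sigma> permutes {..<N}}"
  have finPerm: "finite ?Perm" by (simp add: finite_permutations)
  have inner: "(\<Sum>\<pi>\<in>?Perm. signof \<sigma> * signof \<pi> * (\<Prod>k<N. G (\<sigma> k) (\<pi> k))) = (\<Prod>j<N. G j j)"
    if \<sigma>: "\<sigma> \<in> ?Perm" for \<sigma>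
  proof -
    have zero: "signof \<sigma> * signof \<pi> * (\<Prod>k<N. G (\<sigma> k) (\<pi> k)) = 0" if \<pi>: "\<pi> \<in> ?Perm - {\<sigma>}" for \<pi>
    proof -
      have "\<exists>k<N. \<sigma> k \<noteq> \<pi> k"
      proof (rule ccontr)
        assume "\<not> ?thesis"
        then have "\<sigma> k = \<pi> k" for k
          using permutes_not_in[of \<sigma> "{..<N}" k] permutes_not_in[of \<pi> "{..<N}" k] \<sigma> \<pi>
          by (cases "k < N") auto
        then show False using \<pi> by auto
      qed
      then obtain k where k: "k < N" "\<sigma> k \<noteq> \<pi> k" by blast
      have "G (\<sigma> k) (\<pi> k) = 0"
        using k \<sigma> \<pi> by (intro orth) (auto intro: perm_lt)
      then have "(\<Prod>k<N. G (\<sigma> k) (\<pi> k)) = 0" using k by (intro prod_zero) auto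
      then show ?thesis by simp
    qed
    have "(\<Sum>\<pi>\<in>?Perm. signof \<sigma> * signof \<pi> * (\<Prod>k<N. G (\<sigma> k) (\<pi> k)))
        = signof \<sigma> * signof \<sigma> * (\<Prod>k<N. G (\<sigma> k) (\<sigma> k))
          + (\<Sum>\<pi>\<in>?Perm - {\<sigma>}. signof \<sigma> * signof \<pi> * (\<Prod>k<N. G (\<sigma> k) (\<pi> k)))"
      using \<sigma> finPerm by (subst sum.remove[of _ \<sigma>]) auto
    also have "(\<Sum>\<pi>\<in>?Perm - {\<sigma>}. signof \<sigma> * signof \<pi> * (\<Prod>k<N. G (\<sigma> k) (\<pi> k))) = 0"
      by (rule sum.neutral) (use zero in blast)
    also have "signof \<sigma> * signof \<sigma> * (\<Prod>k<N. G (\<sigma> k) (\<sigma> k)) + 0 = (\<Prod>k<N. G (\<sigma> k) (\<sigma> k))"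
      by (simp add: signof_sq)
    also have "\<dots> = (\<Prod>j<N. G j j)"
      using prod.permute[of \<sigma> "{..<N}" "\<lambda>j. G j j"] \<sigma> by (simp add: comp_def)
    finally show ?thesis .
  qed
  have "(\<Sum>\<sigma>\<in>?Perm. \<Sum>\<pi>\<in>?Perm. signof \<sigma> * signof \<pi> * (\<Prod>k<N. G (\<sigma> k) (\<pi> k)))
      = (\<Sum>\<sigma>\<in>?Perm. (\<Prod>j<N. G j j))"
    using inner by (intro sum.cong) auto
  also have "\<dots> = of_nat (card ?Perm) * (\<Prod>j<N. G j j)" by simp
  also have "card ?Perm = fact N" by (rule card_permutations) auto
  finally show ?thesis by simp
qed

definition wch :: "nat \<Rightarrow> real set \<Rightarrow> (nat \<Rightarrow> real) set" where
  "wch N S = {x. (\<forall>k<N. x k \<in> S) \<and> (\<forall>k. Suc k < N \<longrightarrow> x k < x (Suc k))}"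

lemma wch_meas:
  assumes S[measurable]: "S \<in> sets borel"
  shows "wch N S \<inter> space (PM N) \<in> sets (PM N)"
proof -
  have 1: "{x \<in> space (PM N). x k \<in> S} \<in> sets (PM N)" if "k < N" for k
    by measurable (use that in auto)
  have 2: "{x \<in> space (PM N). x k < x (Suc k)} \<in> sets (PM N)" if "Suc k < N" for k
    by measurable (use that in auto)
  have c1: "{x \<in> space (PM N). k < N \<longrightarrow> x k \<in> S} \<in> sets (PM N)" for k
    using 1[of k] by (cases "k < N") auto
  have c2: "{x \<in> space (PM N). Suc k < N \<longrightarrow> x k < x (Suc k)} \<in> sets (PM N)" for k
    using 2[of k] by (cases "Suc k < N") auto
  have "wch N S \<inter> space (PM N) = {x \<in> space (PM N). \<forall>k. k < N \<longrightarrow> x k \<in> S}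
          \<inter> {x \<in> space (PM N). \<forall>k. Suc k < N \<longrightarrow> x k < x (Suc k)}"
    by (auto simp: wch_def)
  also have "\<dots> \<in> sets (PM N)"
    using c1 c2 by (intro sets.Int sets.sets_Collect_countable_All)
  finally show ?thesis .
qed

lemma andreief:
  fixes f g :: "nat \<Rightarrow> real \<Rightarrow> complex" and S :: "real set"
  assumes S[measurable]: "S \<in> sets borel"
  and int: "\<And>a b. a < N \<Longrightarrow> b < N \<Longrightarrow> integrable lborel (\<lambda>y. indicator S y *\<^sub>R (cnj (f a y) * g b y))"
  and orth: "\<And>a b. a < N \<Longrightarrow> b < N \<Longrightarrow> a \<noteq> b \<Longrightarrow> (\<integral>y. indicator S y *\<^sub>R (cnj (f a y) * g b y) \<partial>lborel) = 0"
  shows "(\<integral>x. indicator (wch N S) x *\<^sub>R (Qdet N (\<lambda>j y. cnj (f j y)) x * Qdet N g x) \<partial>PM N)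
         = (\<Prod>j<N. \<integral>y. indicator S y *\<^sub>R (cnj (f j y) * g j y) \<partial>lborel)"
proof -
  let ?Perm = "{\<sigma>. \<sigma> permutes {..<N}}"
  define P where "P x = Qdet N (\<lambda>j y. cnj (f j y)) x * Qdet N g x" for x
  define h where "h a b y = indicator S y *\<^sub>R (cnj (f a y) * g b y)" for a b y
  define G where "G a b = (\<integral>y. h a b y \<partial>lborel)" for a b
  define C where "C = {x::nat\<Rightarrow>real. \<forall>k<N. x k \<in> S}"
  define T where "T p = (\<lambda>x::nat \<Rightarrow> real. \<lambda>i\<in>{..<N}. x (p i))" for p :: "nat \<Rightarrow> nat"
  interpret product_sigma_finite "\<lambda>_::nat. lborel::real measure" by standard
  have finPerm: "finite ?Perm" by (simp add: finite_permutations)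
  have expand: "indicator C x *\<^sub>R P x = (\<Sum>\<sigma>\<in>?Perm. \<Sum>\<pi>\<in>?Perm. signof \<sigma> * signof \<pi> * (\<Prod>k<N. h (\<sigma> k) (\<pi> k) (x k)))" for x
  proof (cases "x \<in> C")
    case True
    have hx: "(\<Prod>k<N. h (\<sigma> k) (\<pi> k) (x k)) = (\<Prod>k<N. cnj (f (\<sigma> k) (x k))) * (\<Prod>k<N. g (\<pi> k) (x k))" for \<sigma> \<pi>
      using True by (auto simp: h_def C_def prod.distrib[symmetric] intro!: prod.cong)
    have "P x = (\<Sum>\<sigma>\<in>?Perm. \<Sum>\<pi>\<in>?Perm. (signof \<sigma> * (\<Prod>k<N. cnj (f (\<sigma> k) (x k)))) * (signof \<pi> * (\<Prod>k<N. g (\<pi> k) (x k))))"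
      by (simp add: P_def Qdet_leibniz sum_product)
    also have "\<dots> = (\<Sum>\<sigma>\<in>?Perm. \<Sum>\<pi>\<in>?Perm. signof \<sigma> * signof \<pi> * (\<Prod>k<N. h (\<sigma> k) (\<pi> k) (x k)))"
      by (simp add: hx mult_ac)
    finally show ?thesis using True by simp
  next
    case False
    then obtain k where k: "k < N" "x k \<notin> S" by (auto simp: C_def)
    then have z: "(\<Prod>k<N. h (\<sigma> k) (\<pi> k) (x k)) = 0" for \<sigma> \<pi> by (intro prod_zero bexI[of _ k]) (auto simp: h_def)
    show ?thesis using False by (simp only: z) simp
  qed
  have intprod: "integrable (PM N) (\<lambda>x. \<Prod>k<N. h (\<sigma> k) (\<pi> k) (x k))"
    if "\<sigma> \<in> ?Perm" "\<pi> \<in> ?Perm" for \<sigma> \<pi>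
    using that unfolding h_def by (intro product_integrable_prod int) (auto intro: perm_lt)
  have intC: "integrable (PM N) (\<lambda>x. indicator C x *\<^sub>R P x)"
    unfolding expand by (intro Bochner_Integration.integrable_sum integrable_mult_right) (auto intro: intprod)
  have "(\<integral>x. indicator C x *\<^sub>R P x \<partial>PM N)
      = (\<Sum>\<sigma>\<in>?Perm. \<Sum>\<pi>\<in>?Perm. signof \<sigma> * signof \<pi> * (\<integral>x. (\<Prod>k<N. h (\<sigma> k) (\<pi> k) (x k)) \<partial>PM N))"
    unfolding expand
    by (subst Bochner_Integration.integral_sum, force intro!: Bochner_Integration.integrable_sum integrable_mult_right intprod)
       (intro sum.cong refl, subst Bochner_Integration.integral_sum, force intro!: integrable_mult_right intprod, simp)
  also have "\<dots> = (\<Sum>\<sigma>\<in>?Perm. \<Sum>\<pi>\<in>?Perm. signof \<sigma> * signof \<pi> * (\<Prod>k<N. G (\<sigma> k) (\<pi> k)))"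
    unfolding G_def h_def
    by (intro sum.cong refl arg_cong2[where f="(*)"] product_integral_prod int) (auto intro: perm_lt)
  also have "\<dots> = fact N * (\<Prod>j<N. G j j)"
    by (rule perm_diag_sum) (use orth in \<open>auto simp: G_def h_def\<close>)
  finally have valC: "(\<integral>x. indicator C x *\<^sub>R P x \<partial>PM N) = fact N * (\<Prod>j<N. G j j)" .
  define W where "W = wch N S \<inter> space (PM N)"
  have Wmeas: "W \<in> sets (PM N)" unfolding W_def by (rule wch_meas) simp
  define h' where "h' x = indicator W x *\<^sub>R P x" for x
  have h'C: "h' x = indicator W x *\<^sub>R (indicator C x *\<^sub>R P x)" for x
    by (auto simp: h'_def W_def C_def wch_def indicator_def)
  have inth': "integrable (PM N) h'"
    unfolding h'C by (rule integrable_mult_indicator[OF Wmeas intC])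
  have h'meas: "h' \<in> borel_measurable (PM N)" using inth' by auto
  have Tmeas: "T p \<in> PM N \<rightarrow>\<^sub>M PM N" if "p \<in> ?Perm" for p
    using Tp_measurable[of p N] that by (simp add: T_def)
  have Tspace: "T p x \<in> space (PM N)" if "p \<in> ?Perm" "x \<in> space (PM N)" for p x
    using measurable_space[OF Tmeas[OF that(1)] that(2)] .
  have symP: "P (T p x) = P x" if "p \<in> ?Perm" for p x
  proof -
    have e: "Qdet N F (T p x) = signof p * Qdet N F x" for F
      using Qdet_perm[of p N F x] that by (simp add: T_def)
    have "P (T p x) = (signof p * signof p) * P x" by (simp only: P_def e mult_ac)
    then show ?thesis by (simp add: signof_sq)
  qed
  have Tk: "T p x k = x (p k)" if "k < N" for p x k using that by (simp add: T_def)
  have TW: "T p x \<in> W \<longleftrightarrow> (\<forall>k<N. x (p k) \<in> S) \<and> (\<forall>k. Suc k < N \<longrightarrow> x (p k) < x (p (Suc k)))"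
    if "p \<in> ?Perm" "x \<in> space (PM N)" for p x
  proof -
    have Tk': "T p x k = x (p k)" if "Suc k < N" for k using that by (simp add: T_def)
    have a: "(\<forall>k<N. T p x k \<in> S) \<longleftrightarrow> (\<forall>k<N. x (p k) \<in> S)" using Tk by simp
    have b: "(\<forall>k. Suc k < N \<longrightarrow> T p x k < T p x (Suc k)) \<longleftrightarrow> (\<forall>k. Suc k < N \<longrightarrow> x (p k) < x (p (Suc k)))"
      using Tk Tk' by simp
    show ?thesis using Tspace[OF that] a b by (simp add: W_def wch_def)
  qed
  have pw: "indicator C x *\<^sub>R P x = (\<Sum>p\<in>?Perm. h' (T p x))" if x: "x \<in> space (PM N)" for x
  proof -
    have h'T: "h' (T p x) = indicator W (T p x) *\<^sub>R P x" if "p \<in> ?Perm" for p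
      using symP[OF that] by (simp add: h'_def)
    show ?thesis
    proof (cases "x \<in> C")
      case xC: True
      then have xS: "\<forall>k<N. x (p k) \<in> S" if "p \<in> ?Perm" for p
        using that by (auto simp: C_def intro: perm_lt)
      show ?thesis
      proof (cases "inj_on x {..<N}")
        case True
        obtain p0 where p0: "p0 permutes {..<N}" "\<forall>k. Suc k < N \<longrightarrow> x (p0 k) < x (p0 (Suc k))"
          using sort_perm_exists[OF True] by blast
        have "h' (T p x) = (if p = p0 then P x else 0)" if p: "p \<in> ?Perm" for p
        proof -
          have "T p x \<in> W \<longleftrightarrow> p = p0"
            using TW[OF p x] xS[OF p] sort_perm_unique[OF True, of p p0] p p0 by (auto simp del: T_def)
          then show ?thesis using h'T[OF p] by (auto simp: indicator_def)
        qed
        then have "(\<Sum>p\<in>?Perm. h' (T p x)) = (\<Sum>p\<in>?Perm. if p = p0 then P x else 0)"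
          by (intro sum.cong) auto
        also have "\<dots> = P x" using p0 finPerm by simp
        finally show ?thesis using xC by simp
      next
        case False
        then obtain k k' where kk: "k < N" "k' < N" "k \<noteq> k'" "x k = x k'"
          by (auto simp: inj_on_def)
        then have "P x = 0" by (simp add: P_def Qdet_ident[OF kk])
        then show ?thesis using h'T by simp
      qed
    next
      case False
      have "T p x \<notin> W" if p: "p \<in> ?Perm" for p
      proof
        assume "T p x \<in> W"
        then have "\<forall>k<N. x (p k) \<in> S" using TW[OF p x] by simp
        then have "x j \<in> S" if "j < N" for j
        proof -
          have i: "Hilbert_Choice.inv p j < N" using that p perm_lt[OF permutes_inv[of p]] by auto
          have "p (Hilbert_Choice.inv p j) = j" using p permutes_inverses(1)[of p "{..<N}" j] by auto
          then show ?thesis using \<open>\<forall>k<N. x (p k) \<in> S\<close> i by metis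
        qed

        then show False using False by (auto simp: C_def)
      qed
      then show ?thesis using False h'T by simp
    qed
  qed
  have intT: "integrable (PM N) (\<lambda>x. h' (T p x))" if "p \<in> ?Perm" for p
  proof -
    have "integrable (distr (PM N) (PM N) (T p)) h'"
      using that PM_reindex[of p N] inth' by (simp add: T_def)
    then show ?thesis using integrable_distr_eq[OF Tmeas[OF that] h'meas] by simp
  qed
  have intTeq: "(\<integral>x. h' (T p x) \<partial>PM N) = (\<integral>x. h' x \<partial>PM N)" if "p \<in> ?Perm" for p
  proof -
    have "(\<integral>x. h' (T p x) \<partial>PM N) = integral\<^sup>L (distr (PM N) (PM N) (T p)) h'"
      by (rule integral_distr[OF Tmeas[OF that] h'meas, symmetric])
    also have "\<dots> = (\<integral>x. h' x \<partial>PM N)"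
      using that PM_reindex[of p N] by (simp add: T_def)
    finally show ?thesis .
  qed
  have "(\<integral>x. indicator C x *\<^sub>R P x \<partial>PM N) = (\<integral>x. (\<Sum>p\<in>?Perm. h' (T p x)) \<partial>PM N)"
    by (intro Bochner_Integration.integral_cong refl) (use pw in auto)
  also have "\<dots> = (\<Sum>p\<in>?Perm. \<integral>x. h' (T p x) \<partial>PM N)"
    using intT by (rule Bochner_Integration.integral_sum)
  also have "\<dots> = (\<Sum>p\<in>?Perm. \<integral>x. h' x \<partial>PM N)"
    by (intro sum.cong refl) (use intTeq in auto)
  also have "\<dots> = fact N * (\<integral>x. h' x \<partial>PM N)"
    by (simp add: card_permutations)
  finally have "fact N * (\<integral>x. h' x \<partial>PM N) = fact N * (\<Prod>j<N. G j j)" using valC by simp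
  then have "(\<integral>x. h' x \<partial>PM N) = (\<Prod>j<N. G j j)" by simp
  moreover have "(\<integral>x. h' x \<partial>PM N) = (\<integral>x. indicator (wch N S) x *\<^sub>R (Qdet N (\<lambda>j y. cnj (f j y)) x * Qdet N g x) \<partial>PM N)"
    by (intro Bochner_Integration.integral_cong) (auto simp: h'_def W_def P_def indicator_def)
  ultimately show ?thesis by (simp add: G_def h_def)
qed

lemma int_summable_split:
  fixes f :: "int \<Rightarrow> 'a::topological_comm_monoid_add"
  assumes "(\<lambda>n. f (int n)) summable_on UNIV" "(\<lambda>n. f (- int n - 1)) summable_on UNIV"
  shows "f summable_on UNIV"
proof -
  have mem: "x \<in> range int \<union> range (\<lambda>n. - int n - 1)" for x :: int
  proof (cases "x \<ge> 0")
    case True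
    then have "x = int (nat x)" by simp
    then show ?thesis by blast
  next
    case False
    then have "x = - int (nat (- x - 1)) - 1" by simp
    then show ?thesis by blast
  qed
  have U: "(UNIV::int set) = range int \<union> range (\<lambda>n. - int n - 1)"
    using mem by blast
  have A: "f summable_on range int"
    using assms(1) by (subst summable_on_reindex) (auto simp: comp_def)
  have B: "f summable_on range (\<lambda>n. - int n - 1)"
    using assms(2) by (subst summable_on_reindex) (auto simp: comp_def inj_on_def)
  have D: "range int \<inter> range (\<lambda>n. - int n - 1) = {}" by auto
  show ?thesis unfolding U by (rule summable_on_Un_disjoint[OF A B D])
qed

lemma exp_abs_summable: "(\<lambda>n::int. exp (- \<bar>real_of_int n\<bar>)) summable_on UNIV"
proof (rule int_summable_split)
  have geo: "summable (\<lambda>n. norm (exp (- 1::real) ^ n))"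
    using summable_geometric[of "exp (-1::real)"] by (simp add: norm_power)
  have "exp (- \<bar>real_of_int (int n)\<bar>) = exp (- 1::real) ^ n" for n
    by (simp add: exp_of_nat_mult[symmetric])
  then show "(\<lambda>n. exp (- \<bar>real_of_int (int n)\<bar>)) summable_on UNIV"
    using norm_summable_imp_summable_on[OF geo] by simp
  have "exp (- \<bar>real_of_int (- int n - 1)\<bar>) = exp (- 1::real) * exp (- 1::real) ^ n" for n
    by (simp add: exp_of_nat_mult[symmetric] exp_add[symmetric] algebra_simps)
  then show "(\<lambda>n. exp (- \<bar>real_of_int (- int n - 1)\<bar>)) summable_on UNIV"
    using summable_on_cmult_right[OF norm_summable_imp_summable_on[OF geo], of "exp (-1)"] by simp
qed

lemma gauss_bound:
  fixes a \<alpha> \<beta> x :: real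
  assumes a: "a > 0" and al: "\<alpha> \<noteq> 0"
  shows "- a * (\<alpha> * x + \<beta>)\<^sup>2 \<le> (1 / \<bar>\<alpha>\<bar>)\<^sup>2 / (4 * a) + \<bar>\<beta>\<bar> / \<bar>\<alpha>\<bar> - \<bar>x\<bar>"
proof -
  define y where "y = \<alpha> * x + \<beta>"
  define B where "B = 1 / \<bar>\<alpha>\<bar>"
  have B: "B > 0" using al by (simp add: B_def)
  have "x = (y - \<beta>) / \<alpha>" using al by (simp add: y_def field_simps)
  then have "\<bar>x\<bar> = \<bar>y - \<beta>\<bar> * B" by (simp add: B_def abs_mult abs_inverse divide_inverse)
  also have "\<dots> \<le> (\<bar>y\<bar> + \<bar>\<beta>\<bar>) * B" using B by (intro mult_right_mono) auto
  finally have xb: "\<bar>x\<bar> \<le> \<bar>y\<bar> * B + \<bar>\<beta>\<bar> * B" by (simp add: algebra_simps)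
  have "0 \<le> (2 * a * \<bar>y\<bar> - B)\<^sup>2" by simp
  then have "0 \<le> 4 * a * (a * y\<^sup>2 - B * \<bar>y\<bar>) + B\<^sup>2"
    by (simp add: power2_eq_square algebra_simps abs_mult_self_eq)
  then have "- a * y\<^sup>2 + B * \<bar>y\<bar> \<le> B\<^sup>2 / (4 * a)"
    using a by (simp add: field_simps)
  moreover have "B * \<bar>\<beta>\<bar> = \<bar>\<beta>\<bar> / \<bar>\<alpha>\<bar>" by (simp add: B_def)
  ultimately have "- a * y\<^sup>2 \<le> B\<^sup>2 / (4 * a) + \<bar>\<beta>\<bar> / \<bar>\<alpha>\<bar> - \<bar>x\<bar>" using xb by (simp add: algebra_simps)
  then show ?thesis by (simp only: y_def B_def)
qed

lemma gauss_summable: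
  fixes a \<alpha> \<beta> c :: real
  assumes a: "a > 0" and al: "\<alpha> \<noteq> 0"
  shows "(\<lambda>n::int. exp (- a * (\<alpha> * real_of_int n + \<beta>)\<^sup>2 + c)) summable_on UNIV"
proof -
  define C where "C = (1 / \<bar>\<alpha>\<bar>)\<^sup>2 / (4 * a) + \<bar>\<beta>\<bar> / \<bar>\<alpha>\<bar>"
  have "(\<lambda>n::int. norm (exp (C + c) * exp (- \<bar>real_of_int n\<bar>))) summable_on UNIV"
    using summable_on_cmult_right[OF exp_abs_summable, of "exp (C + c)"] by simp
  then have "(\<lambda>n::int. norm (exp (- a * (\<alpha> * real_of_int n + \<beta>)\<^sup>2 + c))) summable_on UNIV"
  proof (rule Infinite_Sum.abs_summable_on_comparison_test)
    fix n :: int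
    have "- a * (\<alpha> * real_of_int n + \<beta>)\<^sup>2 + c \<le> C + c + - \<bar>real_of_int n\<bar>"
      using gauss_bound[OF a al, of "real_of_int n" \<beta>] by (simp add: C_def)
    then have "exp (- a * (\<alpha> * real_of_int n + \<beta>)\<^sup>2 + c) \<le> exp (C + c + - \<bar>real_of_int n\<bar>)" by simp
    then show "norm (exp (- a * (\<alpha> * real_of_int n + \<beta>)\<^sup>2 + c)) \<le> norm (exp (C + c) * exp (- \<bar>real_of_int n\<bar>))"
      by (simp add: exp_add[symmetric])
  qed
  then show ?thesis by (rule abs_summable_summable)
qed

definition wf :: "real \<Rightarrow> real \<Rightarrow> int \<Rightarrow> real" where
  "wf NN J n = NN * (of_int n - 1/2) + J"

definition Ef :: "real \<Rightarrow> real \<Rightarrow> real \<Rightarrow> real \<Rightarrow> int \<Rightarrow> real" where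
  "Ef r t NN J n = exp (- (t / (2 * r\<^sup>2)) * ((wf NN J n)\<^sup>2 - J\<^sup>2))"

lemma Ef_summable:
  assumes "r \<noteq> 0" "t > 0" "NN \<noteq> 0"
  shows "Ef r t NN J summable_on UNIV"
proof -
  have a: "t / (2 * r\<^sup>2) > 0" using assms by simp
  have "Ef r t NN J = (\<lambda>n. exp (- (t / (2 * r\<^sup>2)) * (NN * real_of_int n + (J - NN / 2))\<^sup>2 + (t / (2 * r\<^sup>2)) * J\<^sup>2))"
    by (rule ext) (simp add: Ef_def wf_def algebra_simps)
  then show ?thesis using gauss_summable[OF a assms(3), of "J - NN / 2" "(t / (2 * r\<^sup>2)) * J\<^sup>2"] by simp
qed

lemma expo_id:
  fixes NN J r t u :: real and n :: int
  assumes "NN \<noteq> 0" "r \<noteq> 0"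
  shows "2 * complex_of_real pi * \<i> * complex_of_real (J / NN) * complex_of_real u
       + (complex_of_real pi * \<i> * (complex_of_real (NN\<^sup>2) * tauf r t) * (of_int n - 1/2)\<^sup>2
       + complex_of_real pi * \<i> * (complex_of_real (J / NN) * (complex_of_real (NN\<^sup>2) * tauf r t) + complex_of_real u) * (2 * of_int n - 1))
       = complex_of_real (- (t / (2 * r\<^sup>2)) * ((wf NN J n)\<^sup>2 - J\<^sup>2)) + \<i> * complex_of_real (2 * pi * u * wf NN J n / NN)"
  using assms pi_neq_zero
  by (simp add: tauf_def wf_def field_simps power2_eq_square)

lemma exp_term_eq:
  assumes "NN \<noteq> 0" "r \<noteq> 0"
    and X: "X = 2 * complex_of_real pi * \<i> * complex_of_real (J / NN) * complex_of_real u"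
    and v: "v = complex_of_real (J / NN) * \<tau> + complex_of_real u"
    and tau: "\<tau> = complex_of_real (NN\<^sup>2) * tauf r t"
  shows "exp X * (exp (pi * \<i> * \<tau> * (of_int n - 1/2)^2) * exp (pi * \<i> * v * (2 * of_int n - 1)))
       = complex_of_real (Ef r t NN J n) * exp (\<i> * complex_of_real (2 * pi * u * wf NN J n / NN))"
proof -
  have "exp X * (exp (pi * \<i> * \<tau> * (of_int n - 1/2)^2) * exp (pi * \<i> * v * (2 * of_int n - 1)))
      = exp (X + (pi * \<i> * \<tau> * (of_int n - 1/2)^2 + pi * \<i> * v * (2 * of_int n - 1)))"
    by (simp add: exp_add)
  also have "X + (pi * \<i> * \<tau> * (of_int n - 1/2)^2 + pi * \<i> * v * (2 * of_int n - 1))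
      = complex_of_real (- (t / (2 * r\<^sup>2)) * ((wf NN J n)\<^sup>2 - J\<^sup>2)) + \<i> * complex_of_real (2 * pi * u * wf NN J n / NN)"
    unfolding X v tau by (rule expo_id) (use assms in auto)
  finally show ?thesis by (simp only: exp_add Ef_def exp_of_real)
qed

lemma summable_Ef_exp:
  assumes "r \<noteq> 0" "t > 0" "NN \<noteq> 0"
  shows "(\<lambda>n. complex_of_real (Ef r t NN J n) * exp (\<i> * complex_of_real (y n))) summable_on UNIV"
proof -
  have "(\<lambda>n. norm (complex_of_real (Ef r t NN J n) * exp (\<i> * complex_of_real (y n)))) summable_on UNIV"
  proof -
    have "(\<lambda>n. norm (complex_of_real (Ef r t NN J n) * exp (\<i> * complex_of_real (y n)))) = Ef r t NN J"
      by (rule ext) (simp add: norm_mult norm_exp_i_times Ef_def)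
    then show ?thesis using Ef_summable[OF assms] by simp
  qed
  then show "(\<lambda>n. complex_of_real (Ef r t NN J n) * exp (\<i> * complex_of_real (y n))) summable_on UNIV"
    by (rule abs_summable_summable)
qed

lemma key2:
  assumes "NN \<noteq> 0" "r \<noteq> 0" "t > 0"
    and X: "X = 2 * complex_of_real pi * \<i> * complex_of_real (J / NN) * complex_of_real u"
    and v: "v = complex_of_real (J / NN) * \<tau> + complex_of_real u"
    and tau: "\<tau> = complex_of_real (NN\<^sup>2) * tauf r t"
  shows "((\<lambda>n. complex_of_real (Ef r t NN J n) * exp (\<i> * complex_of_real (2 * pi * u * wf NN J n / NN)))
           has_sum (exp X * jtheta2 v \<tau>)) UNIV"
proof -
  define T where "T n = exp (pi * \<i> * \<tau> * (of_int n - 1/2)^2) * exp (pi * \<i> * v * (2 * of_int n - 1))" for n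
  have eq: "exp X * T n = complex_of_real (Ef r t NN J n) * exp (\<i> * complex_of_real (2 * pi * u * wf NN J n / NN))" for n
    unfolding T_def by (rule exp_term_eq[OF assms(1,2) X v tau])
  have "(\<lambda>n. exp X * T n) summable_on UNIV"
    unfolding eq by (rule summable_Ef_exp[OF assms(2,3,1)])
  then have "T summable_on UNIV" by (subst (asm) summable_on_cmult_right') auto
  then have "(T has_sum jtheta2 v \<tau>) UNIV" unfolding jtheta2_def T_def by (rule has_sum_infsum[unfolded T_def])
  then have "((\<lambda>n. exp X * T n) has_sum (exp X * jtheta2 v \<tau>)) UNIV" by (rule has_sum_cmult_right)
  then show ?thesis unfolding eq .
qed

lemma key1:
  assumes "NN \<noteq> 0" "r \<noteq> 0" "t > 0"
    and X: "X = 2 * complex_of_real pi * \<i> * complex_of_real (J / NN) * complex_of_real u"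
    and v: "v = complex_of_real (J / NN) * \<tau> + complex_of_real u"
    and tau: "\<tau> = complex_of_real (NN\<^sup>2) * tauf r t"
  shows "((\<lambda>n. \<i> * ((-1) ^ nat \<bar>n\<bar> * (complex_of_real (Ef r t NN J n) * exp (\<i> * complex_of_real (2 * pi * u * wf NN J n / NN)))))
           has_sum (exp X * jtheta1 v \<tau>)) UNIV"
proof -
  define T where "T n = (-1) ^ nat \<bar>n\<bar> * exp (pi * \<i> * \<tau> * (of_int n - 1/2)^2) * exp (pi * \<i> * v * (2 * of_int n - 1))" for n
  have eq: "exp X * T n = (-1) ^ nat \<bar>n\<bar> * (complex_of_real (Ef r t NN J n) * exp (\<i> * complex_of_real (2 * pi * u * wf NN J n / NN)))" for n
    unfolding T_def using exp_term_eq[OF assms(1,2) X v tau, of n] by (simp add: mult_ac)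
  have sgn: "norm ((-1::complex) ^ nat \<bar>n\<bar>) = 1" for n by (simp add: norm_power)
  have "(\<lambda>n. norm (complex_of_real (Ef r t NN J n) * exp (\<i> * complex_of_real (2 * pi * u * wf NN J n / NN)))) summable_on UNIV"
  proof -
    have "(\<lambda>n. norm (complex_of_real (Ef r t NN J n) * exp (\<i> * complex_of_real (2 * pi * u * wf NN J n / NN)))) = Ef r t NN J"
      by (rule ext) (simp add: norm_mult norm_exp_i_times Ef_def)
    then show ?thesis using Ef_summable[OF assms(2,3,1)] by simp
  qed
  then have "(\<lambda>n. norm (exp X * T n)) summable_on UNIV"
    unfolding eq by (simp add: norm_mult sgn)
  then have "(\<lambda>n. exp X * T n) summable_on UNIV" by (rule abs_summable_summable)
  then have "T summable_on UNIV" by (subst (asm) summable_on_cmult_right') auto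
  then have "(T has_sum (\<Sum>\<^sub>\<infinity>n. T n)) UNIV" by (rule has_sum_infsum)
  then have "((\<lambda>n. exp X * (\<i> * T n)) has_sum (exp X * (\<i> * (\<Sum>\<^sub>\<infinity>n. T n)))) UNIV"
    by (intro has_sum_cmult_right)
  moreover have "\<i> * (\<Sum>\<^sub>\<infinity>n. T n) = jtheta1 v \<tau>" by (simp add: jtheta1_def T_def)
  moreover have "exp X * (\<i> * T n) = \<i> * ((-1) ^ nat \<bar>n\<bar> * (complex_of_real (Ef r t NN J n) * exp (\<i> * complex_of_real (2 * pi * u * wf NN J n / NN))))" for n
    using eq[of n] by (metis mult.left_commute)
  ultimately show ?thesis by simp
qed

lemma has_sum_diff':
  fixes f g :: "'a \<Rightarrow> 'b::topological_ab_group_add"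
  assumes "(f has_sum a) A" "(g has_sum b) A"
  shows "((\<lambda>x. f x - g x) has_sum (a - b)) A"
proof -
  have "((\<lambda>x. - g x) has_sum (- b)) A" using assms(2) by (subst has_sum_uminus) simp
  from has_sum_add[OF assms(1) this] show ?thesis by simp
qed

lemma euler_e1: "exp (\<i> * complex_of_real a) = complex_of_real (cos a) + \<i> * complex_of_real (sin a)"
  using exp_Euler[of "complex_of_real a"] by (simp add: cos_of_real sin_of_real)

lemma euler_e2: "exp (- (\<i> * complex_of_real a)) = complex_of_real (cos a) - \<i> * complex_of_real (sin a)"
  using exp_Euler[of "- complex_of_real a"] by (simp add: cos_of_real sin_of_real)

lemma euler_sin: "exp (\<i> * complex_of_real a) - exp (\<i> * complex_of_real (- a)) = 2 * \<i> * complex_of_real (sin a)"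
  by (simp add: euler_e1 euler_e2)

lemma euler_cos: "exp (\<i> * complex_of_real a) + exp (\<i> * complex_of_real (- a)) = 2 * complex_of_real (cos a)"
  by (simp add: euler_e1 euler_e2)

lemma angle_plus:
  assumes "NN \<noteq> 0" "r \<noteq> 0"
  shows "2 * pi * (NN * xi r x) * w / NN = x * w / r"
  using assms by (simp add: xi_def field_simps)

lemma angle_minus:
  assumes "NN \<noteq> 0" "r \<noteq> 0"
  shows "2 * pi * (- (NN * xi r x)) * w / NN = - (x * w / r)"
  using assms by (simp add: xi_def field_simps)

lemma Theta_A_series:
  assumes "NN \<noteq> 0" "r \<noteq> 0" "t > 0"
  shows "((\<lambda>n. complex_of_real (Ef r t NN J n) * exp (\<i> * complex_of_real (x * wf NN J n / r)))
          has_sum Theta ThA (J / NN) (complex_of_real (NN * xi r x)) (complex_of_real (NN\<^sup>2) * tauf r t)) UNIV"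
proof -
  have "((\<lambda>n. complex_of_real (Ef r t NN J n) * exp (\<i> * complex_of_real (2 * pi * (NN * xi r x) * wf NN J n / NN)))
          has_sum Theta ThA (J / NN) (complex_of_real (NN * xi r x)) (complex_of_real (NN\<^sup>2) * tauf r t)) UNIV"
    unfolding Theta_def theta_kind.case by (rule key2[OF assms]) simp_all
  then show ?thesis by (simp only: angle_plus[OF assms(1,2)])
qed

lemma Theta_C_series:
  assumes "NN \<noteq> 0" "r \<noteq> 0" "t > 0"
  shows "((\<lambda>n. 2 * \<i> * complex_of_real (Ef r t NN J n) * complex_of_real (sin (x * wf NN J n / r)))
          has_sum Theta ThC (J / NN) (complex_of_real (NN * xi r x)) (complex_of_real (NN\<^sup>2) * tauf r t)) UNIV"
proof -
  have "((\<lambda>n. complex_of_real (Ef r t NN J n) * exp (\<i> * complex_of_real (2 * pi * (NN * xi r x) * wf NN J n / NN))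
           - complex_of_real (Ef r t NN J n) * exp (\<i> * complex_of_real (2 * pi * (- (NN * xi r x)) * wf NN J n / NN)))
          has_sum Theta ThC (J / NN) (complex_of_real (NN * xi r x)) (complex_of_real (NN\<^sup>2) * tauf r t)) UNIV"
    unfolding Theta_def theta_kind.case
    by (rule has_sum_diff'; rule key2[OF assms]) simp_all
  moreover have "complex_of_real (Ef r t NN J n) * exp (\<i> * complex_of_real (2 * pi * (NN * xi r x) * wf NN J n / NN))
           - complex_of_real (Ef r t NN J n) * exp (\<i> * complex_of_real (2 * pi * (- (NN * xi r x)) * wf NN J n / NN))
        = 2 * \<i> * complex_of_real (Ef r t NN J n) * complex_of_real (sin (x * wf NN J n / r))" for n
    unfolding angle_plus[OF assms(1,2)] angle_minus[OF assms(1,2)] right_diff_distrib[symmetric] euler_sin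
    by (simp add: mult_ac)
  ultimately show ?thesis by simp
qed

lemma Theta_D_series:
  assumes "NN \<noteq> 0" "r \<noteq> 0" "t > 0"
  shows "((\<lambda>n. 2 * complex_of_real (Ef r t NN J n) * complex_of_real (cos (x * wf NN J n / r)))
          has_sum Theta ThD (J / NN) (complex_of_real (NN * xi r x)) (complex_of_real (NN\<^sup>2) * tauf r t)) UNIV"
proof -
  have "((\<lambda>n. complex_of_real (Ef r t NN J n) * exp (\<i> * complex_of_real (2 * pi * (NN * xi r x) * wf NN J n / NN))
           + complex_of_real (Ef r t NN J n) * exp (\<i> * complex_of_real (2 * pi * (- (NN * xi r x)) * wf NN J n / NN)))
          has_sum Theta ThD (J / NN) (complex_of_real (NN * xi r x)) (complex_of_real (NN\<^sup>2) * tauf r t)) UNIV"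
    unfolding Theta_def theta_kind.case
    by (rule has_sum_add; rule key2[OF assms]) simp_all
  moreover have "complex_of_real (Ef r t NN J n) * exp (\<i> * complex_of_real (2 * pi * (NN * xi r x) * wf NN J n / NN))
           + complex_of_real (Ef r t NN J n) * exp (\<i> * complex_of_real (2 * pi * (- (NN * xi r x)) * wf NN J n / NN))
        = 2 * complex_of_real (Ef r t NN J n) * complex_of_real (cos (x * wf NN J n / r))" for n
    unfolding angle_plus[OF assms(1,2)] angle_minus[OF assms(1,2)] distrib_left[symmetric] euler_cos
    by (simp add: mult_ac)
  ultimately show ?thesis by simp
qed

lemma Theta_B_series:
  assumes "NN \<noteq> 0" "r \<noteq> 0" "t > 0"
  shows "((\<lambda>n. - 2 * (-1) ^ nat \<bar>n\<bar> * complex_of_real (Ef r t NN J n) * complex_of_real (sin (x * wf NN J n / r)))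
          has_sum Theta ThB (J / NN) (complex_of_real (NN * xi r x)) (complex_of_real (NN\<^sup>2) * tauf r t)) UNIV"
proof -
  have "((\<lambda>n. \<i> * ((-1) ^ nat \<bar>n\<bar> * (complex_of_real (Ef r t NN J n) * exp (\<i> * complex_of_real (2 * pi * (NN * xi r x) * wf NN J n / NN))))
           - \<i> * ((-1) ^ nat \<bar>n\<bar> * (complex_of_real (Ef r t NN J n) * exp (\<i> * complex_of_real (2 * pi * (- (NN * xi r x)) * wf NN J n / NN)))))
          has_sum Theta ThB (J / NN) (complex_of_real (NN * xi r x)) (complex_of_real (NN\<^sup>2) * tauf r t)) UNIV"
    unfolding Theta_def theta_kind.case
    by (rule has_sum_diff'; rule key1[OF assms]) simp_all
  moreover have "\<i> * ((-1) ^ nat \<bar>n\<bar> * (complex_of_real (Ef r t NN J n) * exp (\<i> * complex_of_real (2 * pi * (NN * xi r x) * wf NN J n / NN))))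
           - \<i> * ((-1) ^ nat \<bar>n\<bar> * (complex_of_real (Ef r t NN J n) * exp (\<i> * complex_of_real (2 * pi * (- (NN * xi r x)) * wf NN J n / NN))))
        = - 2 * (-1) ^ nat \<bar>n\<bar> * complex_of_real (Ef r t NN J n) * complex_of_real (sin (x * wf NN J n / r))" for n
  proof -
    have "\<i> * ((-1) ^ nat \<bar>n\<bar> * (complex_of_real (Ef r t NN J n) * exp (\<i> * complex_of_real (x * wf NN J n / r))))
           - \<i> * ((-1) ^ nat \<bar>n\<bar> * (complex_of_real (Ef r t NN J n) * exp (\<i> * complex_of_real (- (x * wf NN J n / r)))))
        = \<i> * (-1) ^ nat \<bar>n\<bar> * complex_of_real (Ef r t NN J n) * (exp (\<i> * complex_of_real (x * wf NN J n / r)) - exp (\<i> * complex_of_real (- (x * wf NN J n / r))))"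
      by (simp add: algebra_simps)
    also have "\<dots> = - 2 * (-1) ^ nat \<bar>n\<bar> * complex_of_real (Ef r t NN J n) * complex_of_real (sin (x * wf NN J n / r))"
      unfolding euler_sin by (simp add: algebra_simps)
    finally show ?thesis unfolding angle_plus[OF assms(1,2)] angle_minus[OF assms(1,2)] .
  qed
  ultimately show ?thesis by simp
qed

lemma has_sum_integral_uniform:
  fixes f :: "int \<Rightarrow> real \<Rightarrow> complex"
  assumes cont: "\<And>n. continuous_on {c..d} (f n)"
    and bnd: "\<And>n x. x \<in> {c..d} \<Longrightarrow> norm (f n x) \<le> B n"
    and B: "B summable_on UNIV"
    and S: "\<And>x. x \<in> {c..d} \<Longrightarrow> ((\<lambda>n. f n x) has_sum S x) UNIV"
  shows "((\<lambda>n. integral {c..d} (f n)) has_sum integral {c..d} S) UNIV"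
    and "continuous_on {c..d} S"
proof -
  have U: "uniform_limit {c..d} (\<lambda>X y. \<Sum>n\<in>X. f n y) S (finite_subsets_at_top UNIV)"
    by (rule Weierstrass_m_test_general'[OF bnd S B]) auto
  have C: "continuous_on {c..d} (\<lambda>y. \<Sum>n\<in>X. f n y)" for X
    by (intro continuous_on_sum cont)
  show "continuous_on {c..d} S"
    by (rule uniform_limit_theorem[OF _ U]) (auto simp: C finite_subsets_at_top_neq_bot)
  obtain I J where I: "\<And>X. ((\<lambda>y. \<Sum>n\<in>X. f n y) has_integral I X) {c..d}"
    and J: "(S has_integral J) {c..d}" and lim: "(I \<longlongrightarrow> J) (finite_subsets_at_top UNIV)"
    using uniform_limit_integral[OF U C finite_subsets_at_top_neq_bot] by blast
  have "I X = (\<Sum>n\<in>X. integral {c..d} (f n))" if "finite X" for X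
  proof -
    have "((\<lambda>y. \<Sum>n\<in>X. f n y) has_integral (\<Sum>n\<in>X. integral {c..d} (f n))) {c..d}"
      using that by (intro has_integral_sum) (auto intro!: integrable_integral integrable_continuous_real cont)
    then show ?thesis using I[of X] by (rule has_integral_unique[symmetric])
  qed
  then have ev: "\<forall>\<^sub>F X in finite_subsets_at_top UNIV. I X = (\<Sum>n\<in>X. integral {c..d} (f n))"
    by (intro eventually_finite_subsets_at_top_weakI) auto
  have "((\<lambda>X. \<Sum>n\<in>X. integral {c..d} (f n)) \<longlongrightarrow> J) (finite_subsets_at_top UNIV)"
    using tendsto_cong[OF ev] lim by simp
  then show "((\<lambda>n. integral {c..d} (f n)) has_sum integral {c..d} S) UNIV"
    using J by (simp add: has_sum_def integral_unique)
qed

lemma cos_int_ortho: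
  fixes k :: int and r :: real and c :: nat
  assumes r: "r > 0"
  shows "((\<lambda>x. cos (x * of_int k / r)) has_integral (if k = 0 then of_nat c * pi * r else 0)) {0..of_nat c * pi * r}"
proof (cases "k = 0")
  case True
  have "((\<lambda>x. 1::real) has_integral (of_nat c * pi * r)) {0..of_nat c * pi * r}"
    using has_integral_const_real[of "1::real" 0 "of_nat c * pi * r"] r by simp
  then show ?thesis using True by simp
next
  case False
  define F where "F x = r / of_int k * sin (x * of_int k / r)" for x
  have d: "(F has_vector_derivative cos (x * of_int k / r)) (at x within {0..of_nat c * pi * r})" for x
    unfolding F_def has_real_derivative_iff_has_vector_derivative[symmetric]
    using False r by (auto intro!: derivative_eq_intros simp: field_simps)
  have "((\<lambda>x. cos (x * of_int k / r)) has_integral (F (of_nat c * pi * r) - F 0)) {0..of_nat c * pi * r}"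
    using r by (intro fundamental_theorem_of_calculus d) auto
  moreover have "F (of_nat c * pi * r) = 0"
  proof -
    have eq: "of_nat c * pi * r * of_int k / r = pi * of_int (int c * k)" using r by simp
    have "sin (of_nat c * pi * r * of_int k / r) = sin (pi * of_int (int c * k))" by (simp only: eq)
    also have "\<dots> = 0" by (rule sin_npi_int)
    finally have "sin (of_nat c * pi * r * of_int k / r) = 0" .
    then show ?thesis unfolding F_def by (simp only: mult_zero_right)
  qed
  moreover have "F 0 = 0" by (simp add: F_def)
  ultimately show ?thesis using False by simp
qed

lemma sin_int_ortho2:
  fixes k :: int and r :: real
  assumes r: "r > 0"
  shows "((\<lambda>x. sin (x * of_int k / r)) has_integral 0) {0..2 * pi * r}"
proof (cases "k = 0")
  case True
  then show ?thesis by simp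
next
  case False
  define F where "F x = - r / of_int k * cos (x * of_int k / r)" for x
  have d: "(F has_vector_derivative sin (x * of_int k / r)) (at x within {0..2 * pi * r})" for x
    unfolding F_def has_real_derivative_iff_has_vector_derivative[symmetric]
    using False r by (auto intro!: derivative_eq_intros simp: field_simps)
  have "((\<lambda>x. sin (x * of_int k / r)) has_integral (F (2 * pi * r) - F 0)) {0..2 * pi * r}"
    using r by (intro fundamental_theorem_of_calculus d) auto
  moreover have "F (2 * pi * r) = F 0"
  proof -
    have "2 * pi * r * of_int k / r = (2 * pi) * of_int k" using r by simp
    then show ?thesis unfolding F_def by (simp only:) simp
  qed
  ultimately show ?thesis by simp
qed

lemma sin_sin_ortho:
  fixes w w' r :: real and k1 k2 :: int
  assumes r: "r > 0" and k1: "w - w' = of_int k1" and k2: "w + w' = of_int k2"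
  shows "((\<lambda>x. sin (x * w / r) * sin (x * w' / r)) has_integral
           (pi * r / 2) * ((if w = w' then 1 else 0) - (if w = - w' then 1 else 0))) {0..pi * r}"
proof -
  have e: "sin (x * w / r) * sin (x * w' / r) = (cos (x * of_int k1 / r) - cos (x * of_int k2 / r)) / 2" for x
    unfolding k1[symmetric] k2[symmetric] sin_times_sin by (simp add: algebra_simps add_divide_distrib diff_divide_distrib)
  have i1: "((\<lambda>x. cos (x * of_int k1 / r)) has_integral (if k1 = 0 then pi * r else 0)) {0..pi * r}"
    using cos_int_ortho[OF r, of k1 1] by (simp only: of_nat_1 mult.left_neutral)
  have i2: "((\<lambda>x. cos (x * of_int k2 / r)) has_integral (if k2 = 0 then pi * r else 0)) {0..pi * r}"
    using cos_int_ortho[OF r, of k2 1] by (simp only: of_nat_1 mult.left_neutral)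
  have "((\<lambda>x. (cos (x * of_int k1 / r) - cos (x * of_int k2 / r)) / 2) has_integral
          ((if k1 = 0 then pi * r else 0) - (if k2 = 0 then pi * r else 0)) / 2) {0..pi * r}"
    using has_integral_diff[OF i1 i2] by (rule has_integral_divide)
  moreover have "w = w' \<longleftrightarrow> k1 = 0" using k1 by (auto simp: algebra_simps)
  moreover have "w = - w' \<longleftrightarrow> k2 = 0" using k2 by (auto simp: algebra_simps)
  ultimately show ?thesis unfolding e by (auto simp: field_simps)
qed

lemma cos_cos_ortho:
  fixes w w' r :: real and k1 k2 :: int
  assumes r: "r > 0" and k1: "w - w' = of_int k1" and k2: "w + w' = of_int k2"
  shows "((\<lambda>x. cos (x * w / r) * cos (x * w' / r)) has_integral
           (pi * r / 2) * ((if w = w' then 1 else 0) + (if w = - w' then 1 else 0))) {0..pi * r}"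
proof -
  have e: "cos (x * w / r) * cos (x * w' / r) = (cos (x * of_int k1 / r) + cos (x * of_int k2 / r)) / 2" for x
    unfolding k1[symmetric] k2[symmetric] cos_times_cos by (simp add: algebra_simps add_divide_distrib diff_divide_distrib)
  have i1: "((\<lambda>x. cos (x * of_int k1 / r)) has_integral (if k1 = 0 then pi * r else 0)) {0..pi * r}"
    using cos_int_ortho[OF r, of k1 1] by (simp only: of_nat_1 mult.left_neutral)
  have i2: "((\<lambda>x. cos (x * of_int k2 / r)) has_integral (if k2 = 0 then pi * r else 0)) {0..pi * r}"
    using cos_int_ortho[OF r, of k2 1] by (simp only: of_nat_1 mult.left_neutral)
  have "((\<lambda>x. (cos (x * of_int k1 / r) + cos (x * of_int k2 / r)) / 2) has_integral
          ((if k1 = 0 then pi * r else 0) + (if k2 = 0 then pi * r else 0)) / 2) {0..pi * r}"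
    using has_integral_add[OF i1 i2] by (rule has_integral_divide)
  moreover have "w = w' \<longleftrightarrow> k1 = 0" using k1 by (auto simp: algebra_simps)
  moreover have "w = - w' \<longleftrightarrow> k2 = 0" using k2 by (auto simp: algebra_simps)
  ultimately show ?thesis unfolding e by (auto simp: field_simps)
qed

lemma exp_ortho:
  fixes w w' r :: real and k :: int
  assumes r: "r > 0" and k: "w' - w = of_int k"
  shows "((\<lambda>x. cnj (exp (\<i> * complex_of_real (x * w / r))) * exp (\<i> * complex_of_real (x * w' / r))) has_integral
           (if w = w' then complex_of_real (2 * pi * r) else 0)) {0..2 * pi * r}"
proof -
  have e: "cnj (exp (\<i> * complex_of_real (x * w / r))) * exp (\<i> * complex_of_real (x * w' / r))
        = complex_of_real (cos (x * of_int k / r)) + \<i> * complex_of_real (sin (x * of_int k / r))" for x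
  proof -
    have c: "cnj (exp (\<i> * complex_of_real (x * w / r))) = exp (- (\<i> * complex_of_real (x * w / r)))"
      by (simp add: exp_cnj)
    have a: "- (\<i> * complex_of_real (x * w / r)) + \<i> * complex_of_real (x * w' / r) = \<i> * complex_of_real (x * of_int k / r)"
    proof -
      have "x * w' / r - x * w / r = x * of_int k / r" using k by (simp add: algebra_simps diff_divide_distrib[symmetric])
      then have "complex_of_real (x * w' / r) - complex_of_real (x * w / r) = complex_of_real (x * of_int k / r)"
        by (simp only: of_real_diff[symmetric])
      then show ?thesis by (simp add: algebra_simps)
    qed
    have "cnj (exp (\<i> * complex_of_real (x * w / r))) * exp (\<i> * complex_of_real (x * w' / r))
        = exp (\<i> * complex_of_real (x * of_int k / r))"
      unfolding c exp_add[symmetric] a ..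
    then show ?thesis by (simp only: euler_e1)
  qed
  have i1: "((\<lambda>x. complex_of_real (cos (x * of_int k / r))) has_integral complex_of_real (if k = 0 then 2 * pi * r else 0)) {0..2 * pi * r}"
    using has_integral_of_real[OF cos_int_ortho[OF r, of k 2]] by (simp only: of_nat_numeral)
  have i2: "((\<lambda>x. \<i> * complex_of_real (sin (x * of_int k / r))) has_integral 0) {0..2 * pi * r}"
    using has_integral_mult_right[OF has_integral_of_real[OF sin_int_ortho2[OF r, of k]], of \<i>] by simp
  have "w = w' \<longleftrightarrow> k = 0" using k by (auto simp: algebra_simps)
  then show ?thesis unfolding e using has_integral_add[OF i1 i2] by auto
qed

lemma series_cont:
  fixes a :: "int \<Rightarrow> complex" and \<phi> :: "int \<Rightarrow> real \<Rightarrow> complex"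
  assumes sa: "(\<lambda>n. norm (a n)) summable_on UNIV"
    and c\<phi>: "\<And>n. continuous_on {c..d} (\<phi> n)"
    and b\<phi>: "\<And>n x. x \<in> {c..d} \<Longrightarrow> norm (\<phi> n x) \<le> 1"
    and hF: "\<And>x. x \<in> {c..d} \<Longrightarrow> ((\<lambda>n. a n * \<phi> n x) has_sum F x) UNIV"
  shows "continuous_on {c..d} F"
proof (rule has_sum_integral_uniform(2))
  show "continuous_on {c..d} (\<lambda>x. a n * \<phi> n x)" for n by (intro continuous_intros c\<phi>)
  show "norm (a n * \<phi> n x) \<le> norm (a n)" if "x \<in> {c..d}" for n x
    using b\<phi>[OF that, of n] by (simp add: norm_mult mult_left_le)
qed (use sa hF in auto)

lemma gram_general:
  fixes a b :: "int \<Rightarrow> complex" and \<phi> \<psi> :: "int \<Rightarrow> real \<Rightarrow> complex" and F G :: "real \<Rightarrow> complex"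
  assumes sa: "(\<lambda>n. norm (a n)) summable_on UNIV" and sb: "(\<lambda>n. norm (b n)) summable_on UNIV"
    and c\<phi>: "\<And>n. continuous_on {c..d} (\<phi> n)" and c\<psi>: "\<And>n. continuous_on {c..d} (\<psi> n)"
    and b\<phi>: "\<And>n x. x \<in> {c..d} \<Longrightarrow> norm (\<phi> n x) \<le> 1" and b\<psi>: "\<And>n x. x \<in> {c..d} \<Longrightarrow> norm (\<psi> n x) \<le> 1"
    and hF: "\<And>x. x \<in> {c..d} \<Longrightarrow> ((\<lambda>n. a n * \<phi> n x) has_sum F x) UNIV"
    and hG: "\<And>x. x \<in> {c..d} \<Longrightarrow> ((\<lambda>m. b m * \<psi> m x) has_sum G x) UNIV"
  shows "((\<lambda>m. b m * (\<Sum>\<^sub>\<infinity>n. cnj (a n) * integral {c..d} (\<lambda>x. cnj (\<phi> n x) * \<psi> m x)))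
           has_sum integral {c..d} (\<lambda>x. cnj (F x) * G x)) UNIV"
proof -
  have contF: "continuous_on {c..d} F" by (rule series_cont[OF sa c\<phi> b\<phi> hF])
  have "bounded (F ` {c..d})" by (intro compact_imp_bounded compact_continuous_image contF compact_Icc)
  then obtain K where K: "K > 0" "\<And>x. x \<in> {c..d} \<Longrightarrow> norm (F x) \<le> K"
    unfolding bounded_pos by auto
  have inner: "integral {c..d} (\<lambda>x. cnj (F x) * \<psi> m x) = (\<Sum>\<^sub>\<infinity>n. cnj (a n) * integral {c..d} (\<lambda>x. cnj (\<phi> n x) * \<psi> m x))" for m
  proof -
    have "((\<lambda>n. integral {c..d} (\<lambda>x. cnj (a n) * (cnj (\<phi> n x) * \<psi> m x))) has_sum integral {c..d} (\<lambda>x. cnj (F x) * \<psi> m x)) UNIV"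
    proof (rule has_sum_integral_uniform(1))
      show "continuous_on {c..d} (\<lambda>x. cnj (a n) * (cnj (\<phi> n x) * \<psi> m x))" for n
        by (intro continuous_intros c\<phi> c\<psi>)
      show "norm (cnj (a n) * (cnj (\<phi> n x) * \<psi> m x)) \<le> norm (a n)" if "x \<in> {c..d}" for n x
      proof -
        have "norm (cnj (\<phi> n x) * \<psi> m x) \<le> 1 * 1"
          unfolding norm_mult complex_mod_cnj using b\<phi>[OF that] b\<psi>[OF that]
          by (intro mult_mono) auto
        then show ?thesis by (simp add: norm_mult mult_left_le)
      qed
      show "((\<lambda>n. cnj (a n) * (cnj (\<phi> n x) * \<psi> m x)) has_sum cnj (F x) * \<psi> m x) UNIV" if "x \<in> {c..d}" for x
      proof -
        have "((\<lambda>n. cnj (a n * \<phi> n x)) has_sum cnj (F x)) UNIV" using hF[OF that] by (simp only: has_sum_cnj_iff)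
        then have "((\<lambda>n. cnj (a n * \<phi> n x) * \<psi> m x) has_sum cnj (F x) * \<psi> m x) UNIV"
          by (rule has_sum_cmult_left)
        then show ?thesis by (simp add: mult_ac)
      qed
    qed (use sa in auto)
    then have "integral {c..d} (\<lambda>x. cnj (F x) * \<psi> m x) = (\<Sum>\<^sub>\<infinity>n. integral {c..d} (\<lambda>x. cnj (a n) * (cnj (\<phi> n x) * \<psi> m x)))"
      by (simp add: infsumI)
    also have "\<dots> = (\<Sum>\<^sub>\<infinity>n. cnj (a n) * integral {c..d} (\<lambda>x. cnj (\<phi> n x) * \<psi> m x))"
      by (simp only: Henstock_Kurzweil_Integration.integral_mult_right)
    finally show ?thesis .
  qed
  have "((\<lambda>m. integral {c..d} (\<lambda>x. b m * (cnj (F x) * \<psi> m x))) has_sum integral {c..d} (\<lambda>x. cnj (F x) * G x)) UNIV"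
  proof (rule has_sum_integral_uniform(1))
    show "continuous_on {c..d} (\<lambda>x. b m * (cnj (F x) * \<psi> m x))" for m
      by (intro continuous_intros contF c\<psi>)
    show "norm (b m * (cnj (F x) * \<psi> m x)) \<le> K * norm (b m)" if "x \<in> {c..d}" for m x
    proof -
      have "norm (cnj (F x) * \<psi> m x) \<le> K * 1"
        unfolding norm_mult complex_mod_cnj using K(2)[OF that] b\<psi>[OF that] K(1)
        by (intro mult_mono) auto
      then have "norm (cnj (F x) * \<psi> m x) * norm (b m) \<le> K * norm (b m)"
        by (intro mult_right_mono) auto
      then show ?thesis by (simp only: norm_mult mult.commute)
    qed
    show "(\<lambda>m. K * norm (b m)) summable_on UNIV" using sb by (rule summable_on_cmult_right)
    show "((\<lambda>m. b m * (cnj (F x) * \<psi> m x)) has_sum cnj (F x) * G x) UNIV" if "x \<in> {c..d}" for x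
    proof -
      have "((\<lambda>m. cnj (F x) * (b m * \<psi> m x)) has_sum cnj (F x) * G x) UNIV"
        by (rule has_sum_cmult_right[OF hG[OF that]])
      then show ?thesis by (simp add: mult_ac)
    qed
  qed
  then show ?thesis
    by (simp only: Henstock_Kurzweil_Integration.integral_mult_right inner)
qed

lemma jtheta2_Ef:
  assumes "NN \<noteq> 0" "r \<noteq> 0" "T > 0"
  shows "((\<lambda>n. complex_of_real (Ef r T NN J n)) has_sum
           jtheta2 (complex_of_real (NN * J) * tauf r T) (complex_of_real (NN\<^sup>2) * tauf r T)) UNIV"
proof -
  have "((\<lambda>n. complex_of_real (Ef r T NN J n) * exp (\<i> * complex_of_real (2 * pi * 0 * wf NN J n / NN)))
           has_sum (exp 0 * jtheta2 (complex_of_real (NN * J) * tauf r T) (complex_of_real (NN\<^sup>2) * tauf r T))) UNIV"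
    by (rule key2[OF assms]) (use assms in \<open>simp_all add: power2_eq_square\<close>)
  then show ?thesis by simp
qed

lemma Ef_mult:
  "Ef r s NN J n * Ef r t NN J n = Ef r (s + t) NN J n"
  unfolding Ef_def exp_add[symmetric]
  by (rule arg_cong[where f=exp]) (simp add: add_divide_distrib[symmetric] algebra_simps)

lemma int_lin0:
  fixes N0 d k :: int
  assumes "N0 > 0" "\<bar>d\<bar> < N0"
  shows "N0 * k + d = 0 \<longleftrightarrow> k = 0 \<and> d = 0"
proof
  assume h: "N0 * k + d = 0"
  have "k = 0"
  proof (rule ccontr)
    assume "k \<noteq> 0"
    then have "k \<ge> 1 \<or> k \<le> -1" by linarith
    then show False
    proof
      assume "k \<ge> 1"
      then have "N0 * k \<ge> N0 * 1" using assms(1) by (intro mult_left_mono) auto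
      then show False using h assms by linarith
    next
      assume "k \<le> -1"
      then have "N0 * k \<le> N0 * (-1)" using assms(1) by (intro mult_left_mono) auto
      then show False using h assms by linarith
    qed
  qed
  then show "k = 0 \<and> d = 0" using h by simp
qed simp

lemma wf_diff_int:
  assumes NN: "NN = of_int N0" and d1: "J - J' = of_int d1"
  shows "wf NN J n - wf NN J' m = of_int (N0 * (n - m) + d1)"
  unfolding wf_def NN using d1 by (simp add: algebra_simps)

lemma wf_sum_int:
  assumes NN: "NN = of_int N0" and d2: "J + J' = of_int d2"
  shows "wf NN J n + wf NN J' m = of_int (N0 * (n + m - 1) + d2)"
  unfolding wf_def NN using d2 by (simp add: algebra_simps)

lemma wf_eq_iff:
  assumes NN: "NN = of_int N0" and N0: "N0 > 0" and d1: "J - J' = of_int d1" and ad1: "\<bar>d1\<bar> < N0"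
  shows "wf NN J n = wf NN J' m \<longleftrightarrow> n = m \<and> d1 = 0"
proof -
  have "wf NN J n = wf NN J' m \<longleftrightarrow> real_of_int (N0 * (n - m) + d1) = 0"
    using wf_diff_int[OF NN d1, of n m] by (metis eq_iff_diff_eq_0)
  also have "\<dots> \<longleftrightarrow> N0 * (n - m) + d1 = 0" by (simp only: of_int_eq_0_iff)
  also have "\<dots> \<longleftrightarrow> n = m \<and> d1 = 0" using int_lin0[OF N0 ad1, of "n - m"] by simp
  finally show ?thesis .
qed

lemma wf_neg_iff:
  assumes NN: "NN = of_int N0" and N0: "N0 > 0" and d2: "J + J' = of_int d2" and d2p: "0 \<le> d2" "d2 \<le> N0"
  shows "wf NN J n = - wf NN J' m \<longleftrightarrow> (d2 = 0 \<and> n = 1 - m) \<or> (d2 = N0 \<and> n = - m)"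
proof -
  have "wf NN J n = - wf NN J' m \<longleftrightarrow> real_of_int (N0 * (n + m - 1) + d2) = 0"
    using wf_sum_int[OF NN d2, of n m] by (metis eq_neg_iff_add_eq_0)
  also have "\<dots> \<longleftrightarrow> N0 * (n + m - 1) + d2 = 0" by (simp only: of_int_eq_0_iff)
  also have "\<dots> \<longleftrightarrow> (d2 = 0 \<and> n = 1 - m) \<or> (d2 = N0 \<and> n = - m)"
  proof (cases "d2 = N0")
    case True
    then have "N0 * (n + m - 1) + d2 = N0 * (n + m)" by (simp add: algebra_simps)
    then show ?thesis using True N0 by auto
  next
    case False
    then have "\<bar>d2\<bar> < N0" using d2p by auto
    then show ?thesis using int_lin0[OF N0, of d2 "n + m - 1"] False by auto
  qed
  finally show ?thesis .
qed

lemma norm_summable_Ef: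
  assumes "r \<noteq> 0" "t > 0" "NN \<noteq> 0" "\<And>n. norm (k n) \<le> 2"
  shows "(\<lambda>n. norm (k n * complex_of_real (Ef r t NN J n))) summable_on UNIV"
proof -
  have "(\<lambda>n. norm (2 * Ef r t NN J n)) summable_on UNIV"
    using summable_on_cmult_right[OF Ef_summable[OF assms(1-3)], of 2 J]
    by (simp add: Ef_def)
  then show ?thesis
  proof (rule Infinite_Sum.abs_summable_on_comparison_test)
    fix n
    have "norm (k n * complex_of_real (Ef r t NN J n)) = norm (k n) * Ef r t NN J n"
      by (simp add: norm_mult Ef_def)
    also have "\<dots> \<le> 2 * Ef r t NN J n" using assms(4)[of n] by (intro mult_right_mono) (auto simp: Ef_def)
    finally show "norm (k n * complex_of_real (Ef r t NN J n)) \<le> norm (2 * Ef r t NN J n)"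
      by (simp add: Ef_def)
  qed
qed

lemma integral_sin_sin:
  assumes r: "r > 0" and NN: "NN = of_int N0" and N0: "N0 > 0"
    and d1: "J - J' = of_int d1" "\<bar>d1\<bar> < N0" and d2: "J + J' = of_int d2" "0 \<le> d2" "d2 < N0"
  shows "integral {0..pi * r} (\<lambda>x. complex_of_real (sin (x * wf NN J n / r)) * complex_of_real (sin (x * wf NN J' m / r)))
       = complex_of_real (pi * r / 2) * ((if n = m \<and> d1 = 0 then 1 else 0) - (if d2 = 0 \<and> n = 1 - m then 1 else 0))"
proof -
  have "((\<lambda>x. sin (x * wf NN J n / r) * sin (x * wf NN J' m / r)) has_integral
           (pi * r / 2) * ((if wf NN J n = wf NN J' m then 1 else 0) - (if wf NN J n = - wf NN J' m then 1 else 0))) {0..pi * r}"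
    by (rule sin_sin_ortho[OF r wf_diff_int[OF NN d1(1)] wf_sum_int[OF NN d2(1)]])
  moreover have "wf NN J n = wf NN J' m \<longleftrightarrow> n = m \<and> d1 = 0" by (rule wf_eq_iff[OF NN N0 d1])
  moreover have "wf NN J n = - wf NN J' m \<longleftrightarrow> d2 = 0 \<and> n = 1 - m"
    using wf_neg_iff[OF NN N0 d2(1) d2(2)] d2(3) by auto
  ultimately have "((\<lambda>x. sin (x * wf NN J n / r) * sin (x * wf NN J' m / r)) has_integral
           (pi * r / 2) * ((if n = m \<and> d1 = 0 then 1 else 0) - (if d2 = 0 \<and> n = 1 - m then 1 else 0))) {0..pi * r}"
    by simp
  from has_integral_of_real[OF this, where 'b=complex]
  have H: "integral {0..pi * r} (\<lambda>x. complex_of_real (sin (x * wf NN J n / r) * sin (x * wf NN J' m / r)))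
      = complex_of_real ((pi * r / 2) * ((if n = m \<and> d1 = 0 then 1 else 0) - (if d2 = 0 \<and> n = 1 - m then 1 else 0)))"
    by (rule integral_unique)
  have eqf: "(\<lambda>x. complex_of_real (sin (x * wf NN J n / r)) * complex_of_real (sin (x * wf NN J' m / r)))
      = (\<lambda>x. complex_of_real (sin (x * wf NN J n / r) * sin (x * wf NN J' m / r)))"
    by (simp add: fun_eq_iff)
  show ?thesis unfolding eqf H by auto
qed

lemma gram_sin_kind:
  assumes r: "r > 0" and s: "s > 0" and t: "t > 0" and NN: "NN = of_int N0" and N0: "N0 > 0"
    and d1: "J - J' = of_int d1" "\<bar>d1\<bar> < N0" and d2: "J + J' = of_int d2" "0 \<le> d2" "d2 < N0"
    and ka: "\<And>n. norm (ka n) \<le> 2" and kb: "\<And>n. norm (kb n) \<le> 2"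
    and hF: "\<And>x. x \<in> {0..pi * r} \<Longrightarrow> ((\<lambda>n. ka n * complex_of_real (Ef r s NN J n) * complex_of_real (sin (x * wf NN J n / r))) has_sum F x) UNIV"
    and hG: "\<And>x. x \<in> {0..pi * r} \<Longrightarrow> ((\<lambda>m. kb m * complex_of_real (Ef r t NN J' m) * complex_of_real (sin (x * wf NN J' m / r))) has_sum G x) UNIV"
  shows "((\<lambda>m. kb m * complex_of_real (Ef r t NN J' m) * (complex_of_real (pi * r / 2) *
            ((if d1 = 0 then cnj (ka m * complex_of_real (Ef r s NN J m)) else 0)
             - (if d2 = 0 then cnj (ka (1 - m) * complex_of_real (Ef r s NN J (1 - m))) else 0))))
          has_sum integral {0..pi * r} (\<lambda>x. cnj (F x) * G x)) UNIV"
proof -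
  define a where "a n = ka n * complex_of_real (Ef r s NN J n)" for n
  define b where "b n = kb n * complex_of_real (Ef r t NN J' n)" for n
  have NN0: "NN \<noteq> 0" using NN N0 by simp
  have r0: "r \<noteq> 0" using r by simp
  have G: "((\<lambda>m. b m * (\<Sum>\<^sub>\<infinity>n. cnj (a n) * integral {0..pi * r} (\<lambda>x. cnj (complex_of_real (sin (x * wf NN J n / r))) * complex_of_real (sin (x * wf NN J' m / r)))))
           has_sum integral {0..pi * r} (\<lambda>x. cnj (F x) * G x)) UNIV"
  proof (rule gram_general)
    show "(\<lambda>n. norm (a n)) summable_on UNIV" unfolding a_def by (rule norm_summable_Ef[OF r0 s NN0 ka])
    show "(\<lambda>n. norm (b n)) summable_on UNIV" unfolding b_def by (rule norm_summable_Ef[OF r0 t NN0 kb])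
  qed (use r0 in \<open>auto intro!: continuous_intros simp: a_def b_def hF hG abs_sin_le_one\<close>)
  have inner: "(\<Sum>\<^sub>\<infinity>n. cnj (a n) * integral {0..pi * r} (\<lambda>x. cnj (complex_of_real (sin (x * wf NN J n / r))) * complex_of_real (sin (x * wf NN J' m / r))))
      = complex_of_real (pi * r / 2) * ((if d1 = 0 then cnj (a m) else 0) - (if d2 = 0 then cnj (a (1 - m)) else 0))" for m
  proof -
    have mm: "m \<noteq> 1 - m" by presburger
    have "((\<lambda>n. cnj (a n) * integral {0..pi * r} (\<lambda>x. cnj (complex_of_real (sin (x * wf NN J n / r))) * complex_of_real (sin (x * wf NN J' m / r))))
        has_sum (\<Sum>n\<in>{m, 1 - m}. cnj (a n) * (complex_of_real (pi * r / 2) * ((if n = m \<and> d1 = 0 then 1 else 0) - (if d2 = 0 \<and> n = 1 - m then 1 else 0))))) UNIV"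
      by (rule has_sum_finite_neutralI[where B="{m, 1 - m}"]) (auto simp: integral_sin_sin[OF r NN N0 d1 d2])
    moreover have "(\<Sum>n\<in>{m, 1 - m}. cnj (a n) * (complex_of_real (pi * r / 2) * ((if n = m \<and> d1 = 0 then 1 else 0) - (if d2 = 0 \<and> n = 1 - m then 1 else 0))))
        = complex_of_real (pi * r / 2) * ((if d1 = 0 then cnj (a m) else 0) - (if d2 = 0 then cnj (a (1 - m)) else 0))"
      using mm by (simp add: algebra_simps)
    ultimately show ?thesis by (simp add: infsumI)
  qed
  show ?thesis using G unfolding inner unfolding a_def b_def .
qed

lemma has_sum_single_pt: "((\<lambda>n. if n = p then c else 0) has_sum c) UNIV"
  by (rule has_sum_finite_neutralI[where B="{p}"]) auto

lemma integral_cos_cos: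
  assumes r: "r > 0" and NN: "NN = of_int N0" and N0: "N0 > 0"
    and d1: "J - J' = of_int d1" "\<bar>d1\<bar> < N0" and d2: "J + J' = of_int d2" "0 \<le> d2" "d2 \<le> N0"
  shows "integral {0..pi * r} (\<lambda>x. complex_of_real (cos (x * wf NN J n / r)) * complex_of_real (cos (x * wf NN J' m / r)))
       = complex_of_real (pi * r / 2) * ((if n = m \<and> d1 = 0 then 1 else 0) + (if (d2 = 0 \<and> n = 1 - m) \<or> (d2 = N0 \<and> n = - m) then 1 else 0))"
proof -
  have "((\<lambda>x. cos (x * wf NN J n / r) * cos (x * wf NN J' m / r)) has_integral
           (pi * r / 2) * ((if wf NN J n = wf NN J' m then 1 else 0) + (if wf NN J n = - wf NN J' m then 1 else 0))) {0..pi * r}"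
    by (rule cos_cos_ortho[OF r wf_diff_int[OF NN d1(1)] wf_sum_int[OF NN d2(1)]])
  moreover have "wf NN J n = wf NN J' m \<longleftrightarrow> n = m \<and> d1 = 0" by (rule wf_eq_iff[OF NN N0 d1])
  moreover have "wf NN J n = - wf NN J' m \<longleftrightarrow> (d2 = 0 \<and> n = 1 - m) \<or> (d2 = N0 \<and> n = - m)"
    by (rule wf_neg_iff[OF NN N0 d2])
  ultimately have "((\<lambda>x. cos (x * wf NN J n / r) * cos (x * wf NN J' m / r)) has_integral
           (pi * r / 2) * ((if n = m \<and> d1 = 0 then 1 else 0) + (if (d2 = 0 \<and> n = 1 - m) \<or> (d2 = N0 \<and> n = - m) then 1 else 0))) {0..pi * r}"
    by simp
  from has_integral_of_real[OF this, where 'b=complex]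
  have H: "integral {0..pi * r} (\<lambda>x. complex_of_real (cos (x * wf NN J n / r) * cos (x * wf NN J' m / r)))
      = complex_of_real ((pi * r / 2) * ((if n = m \<and> d1 = 0 then 1 else 0) + (if (d2 = 0 \<and> n = 1 - m) \<or> (d2 = N0 \<and> n = - m) then 1 else 0)))"
    by (rule integral_unique)
  have eqf: "(\<lambda>x. complex_of_real (cos (x * wf NN J n / r)) * complex_of_real (cos (x * wf NN J' m / r)))
      = (\<lambda>x. complex_of_real (cos (x * wf NN J n / r) * cos (x * wf NN J' m / r)))"
    by (simp add: fun_eq_iff)
  show ?thesis unfolding eqf H by auto
qed

lemma gram_cos_kind:
  assumes r: "r > 0" and s: "s > 0" and t: "t > 0" and NN: "NN = of_int N0" and N0: "N0 > 0"
    and d1: "J - J' = of_int d1" "\<bar>d1\<bar> < N0" and d2: "J + J' = of_int d2" "0 \<le> d2" "d2 \<le> N0"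
    and ka: "\<And>n. norm (ka n) \<le> 2" and kb: "\<And>n. norm (kb n) \<le> 2"
    and hF: "\<And>x. x \<in> {0..pi * r} \<Longrightarrow> ((\<lambda>n. ka n * complex_of_real (Ef r s NN J n) * complex_of_real (cos (x * wf NN J n / r))) has_sum F x) UNIV"
    and hG: "\<And>x. x \<in> {0..pi * r} \<Longrightarrow> ((\<lambda>m. kb m * complex_of_real (Ef r t NN J' m) * complex_of_real (cos (x * wf NN J' m / r))) has_sum G x) UNIV"
  shows "((\<lambda>m. kb m * complex_of_real (Ef r t NN J' m) * (complex_of_real (pi * r / 2) *
            ((if d1 = 0 then cnj (ka m * complex_of_real (Ef r s NN J m)) else 0)
             + (if d2 = 0 then cnj (ka (1 - m) * complex_of_real (Ef r s NN J (1 - m))) else 0)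
             + (if d2 = N0 then cnj (ka (- m) * complex_of_real (Ef r s NN J (- m))) else 0))))
          has_sum integral {0..pi * r} (\<lambda>x. cnj (F x) * G x)) UNIV"
proof -
  define a where "a n = ka n * complex_of_real (Ef r s NN J n)" for n
  define b where "b n = kb n * complex_of_real (Ef r t NN J' n)" for n
  have NN0: "NN \<noteq> 0" using NN N0 by simp
  have r0: "r \<noteq> 0" using r by simp
  have G: "((\<lambda>m. b m * (\<Sum>\<^sub>\<infinity>n. cnj (a n) * integral {0..pi * r} (\<lambda>x. cnj (complex_of_real (cos (x * wf NN J n / r))) * complex_of_real (cos (x * wf NN J' m / r)))))
           has_sum integral {0..pi * r} (\<lambda>x. cnj (F x) * G x)) UNIV"
  proof (rule gram_general)
    show "(\<lambda>n. norm (a n)) summable_on UNIV" unfolding a_def by (rule norm_summable_Ef[OF r0 s NN0 ka])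
    show "(\<lambda>n. norm (b n)) summable_on UNIV" unfolding b_def by (rule norm_summable_Ef[OF r0 t NN0 kb])
  qed (use r0 in \<open>auto intro!: continuous_intros simp: a_def b_def hF hG abs_cos_le_one\<close>)
  have inner: "(\<Sum>\<^sub>\<infinity>n. cnj (a n) * integral {0..pi * r} (\<lambda>x. cnj (complex_of_real (cos (x * wf NN J n / r))) * complex_of_real (cos (x * wf NN J' m / r))))
      = complex_of_real (pi * r / 2) * ((if d1 = 0 then cnj (a m) else 0) + (if d2 = 0 then cnj (a (1 - m)) else 0) + (if d2 = N0 then cnj (a (- m)) else 0))" for m
  proof -
    have fe: "cnj (a n) * integral {0..pi * r} (\<lambda>x. cnj (complex_of_real (cos (x * wf NN J n / r))) * complex_of_real (cos (x * wf NN J' m / r)))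
        = (if n = m then complex_of_real (pi * r / 2) * (if d1 = 0 then cnj (a m) else 0) else 0)
          + (if n = 1 - m then complex_of_real (pi * r / 2) * (if d2 = 0 then cnj (a (1 - m)) else 0) else 0)
          + (if n = - m then complex_of_real (pi * r / 2) * (if d2 = N0 then cnj (a (- m)) else 0) else 0)" for n
    proof -
      have "m \<noteq> 1 - m" "- m \<noteq> 1 - m" by presburger+
      moreover have "d2 = 0 \<Longrightarrow> d2 \<noteq> N0" using N0 by auto
      ultimately show ?thesis
        by (simp add: integral_cos_cos[OF r NN N0 d1 d2])
    qed
    have "((\<lambda>n. cnj (a n) * integral {0..pi * r} (\<lambda>x. cnj (complex_of_real (cos (x * wf NN J n / r))) * complex_of_real (cos (x * wf NN J' m / r))))
        has_sum (complex_of_real (pi * r / 2) * (if d1 = 0 then cnj (a m) else 0)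
               + complex_of_real (pi * r / 2) * (if d2 = 0 then cnj (a (1 - m)) else 0)
               + complex_of_real (pi * r / 2) * (if d2 = N0 then cnj (a (- m)) else 0))) UNIV"
      unfolding fe by (intro has_sum_add has_sum_single_pt)
    then show ?thesis by (simp add: infsumI algebra_simps)
  qed
  show ?thesis using G unfolding inner unfolding a_def b_def .
qed

lemma integral_exp_exp:
  assumes r: "r > 0" and NN: "NN = of_int N0" and N0: "N0 > 0"
    and d1: "J - J' = of_int d1" "\<bar>d1\<bar> < N0"
  shows "integral {0..2 * pi * r} (\<lambda>x. cnj (exp (\<i> * complex_of_real (x * wf NN J n / r))) * exp (\<i> * complex_of_real (x * wf NN J' m / r)))
       = (if n = m \<and> d1 = 0 then complex_of_real (2 * pi * r) else 0)"
proof -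
  have k: "wf NN J' m - wf NN J n = of_int (- (N0 * (n - m) + d1))"
    using wf_diff_int[OF NN d1(1), of n m] by simp
  have "wf NN J n = wf NN J' m \<longleftrightarrow> n = m \<and> d1 = 0" by (rule wf_eq_iff[OF NN N0 d1])
  then show ?thesis using exp_ortho[OF r k] by (auto intro: integral_unique)
qed

lemma gram_exp_kind:
  assumes r: "r > 0" and s: "s > 0" and t: "t > 0" and NN: "NN = of_int N0" and N0: "N0 > 0"
    and d1: "J - J' = of_int d1" "\<bar>d1\<bar> < N0"
    and hF: "\<And>x. x \<in> {0..2 * pi * r} \<Longrightarrow> ((\<lambda>n. complex_of_real (Ef r s NN J n) * exp (\<i> * complex_of_real (x * wf NN J n / r))) has_sum F x) UNIV"
    and hG: "\<And>x. x \<in> {0..2 * pi * r} \<Longrightarrow> ((\<lambda>m. complex_of_real (Ef r t NN J' m) * exp (\<i> * complex_of_real (x * wf NN J' m / r))) has_sum G x) UNIV"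
  shows "((\<lambda>m. complex_of_real (Ef r t NN J' m) * (if d1 = 0 then cnj (complex_of_real (Ef r s NN J m)) * complex_of_real (2 * pi * r) else 0))
          has_sum integral {0..2 * pi * r} (\<lambda>x. cnj (F x) * G x)) UNIV"
proof -
  define a where "a n = complex_of_real (Ef r s NN J n)" for n
  define b where "b n = complex_of_real (Ef r t NN J' n)" for n
  have NN0: "NN \<noteq> 0" using NN N0 by simp
  have r0: "r \<noteq> 0" using r by simp
  have G: "((\<lambda>m. b m * (\<Sum>\<^sub>\<infinity>n. cnj (a n) * integral {0..2 * pi * r} (\<lambda>x. cnj (exp (\<i> * complex_of_real (x * wf NN J n / r))) * exp (\<i> * complex_of_real (x * wf NN J' m / r)))))
           has_sum integral {0..2 * pi * r} (\<lambda>x. cnj (F x) * G x)) UNIV"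
  proof (rule gram_general)
    show "(\<lambda>n. norm (a n)) summable_on UNIV" unfolding a_def
      using norm_summable_Ef[OF r0 s NN0, of "\<lambda>_. 1"] by simp
    show "(\<lambda>n. norm (b n)) summable_on UNIV" unfolding b_def
      using norm_summable_Ef[OF r0 t NN0, of "\<lambda>_. 1"] by simp
    show "((\<lambda>n. a n * exp (\<i> * complex_of_real (x * wf NN J n / r))) has_sum F x) UNIV" if "x \<in> {0..2 * pi * r}" for x
      unfolding a_def by (rule hF[OF that])
    show "((\<lambda>n. b n * exp (\<i> * complex_of_real (x * wf NN J' n / r))) has_sum G x) UNIV" if "x \<in> {0..2 * pi * r}" for x
      unfolding b_def by (rule hG[OF that])
  qed (use r0 in \<open>auto intro!: continuous_intros simp: norm_exp_i_times\<close>)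
  have inner: "(\<Sum>\<^sub>\<infinity>n. cnj (a n) * integral {0..2 * pi * r} (\<lambda>x. cnj (exp (\<i> * complex_of_real (x * wf NN J n / r))) * exp (\<i> * complex_of_real (x * wf NN J' m / r))))
      = (if d1 = 0 then cnj (a m) * complex_of_real (2 * pi * r) else 0)" for m
  proof -
    have fe: "cnj (a n) * integral {0..2 * pi * r} (\<lambda>x. cnj (exp (\<i> * complex_of_real (x * wf NN J n / r))) * exp (\<i> * complex_of_real (x * wf NN J' m / r)))
        = (if n = m then (if d1 = 0 then cnj (a m) * complex_of_real (2 * pi * r) else 0) else 0)" for n
      unfolding integral_exp_exp[OF r NN N0 d1] by auto
    show ?thesis unfolding fe by (rule infsumI[OF has_sum_single_pt])
  qed
  show ?thesis using G unfolding inner unfolding a_def b_def .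
qed

definition jth :: "real \<Rightarrow> real \<Rightarrow> real \<Rightarrow> real \<Rightarrow> complex" where
  "jth NN J r T = jtheta2 (complex_of_real (NN * J) * tauf r T) (complex_of_real (NN\<^sup>2) * tauf r T)"

definition ThF :: "theta_kind \<Rightarrow> real \<Rightarrow> real \<Rightarrow> real \<Rightarrow> real \<Rightarrow> real \<Rightarrow> complex" where
  "ThF k NN J r u x = Theta k (J / NN) (complex_of_real (NN * xi r x)) (complex_of_real (NN\<^sup>2) * tauf r u)"

lemma Ef_sym:
  assumes "wf NN J n' = - wf NN J n"
  shows "Ef r t NN J n' = Ef r t NN J n"
  using assms by (simp add: Ef_def)

lemma sign_flip: "(-1::complex) ^ nat \<bar>1 - m\<bar> = - ((-1) ^ nat \<bar>m\<bar>)"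
proof -
  have "even (nat \<bar>1 - m\<bar>) \<longleftrightarrow> \<not> even (nat \<bar>m\<bar>)"
    by (simp add: even_nat_iff)
  then show ?thesis by (auto simp: minus_one_power_iff)
qed

lemma sum_result:
  fixes f :: "int \<Rightarrow> complex"
  assumes r: "r > 0" and s: "s > 0" and t: "t > 0" and NN0: "NN \<noteq> 0"
    and H: "(f has_sum I) UNIV"
    and fe: "\<And>m. f m = complex_of_real c * complex_of_real (Ef r (s + t) NN J m)"
  shows "I = complex_of_real c * jth NN J r (s + t)"
proof -
  have "(f has_sum complex_of_real c * jth NN J r (s + t)) UNIV"
    unfolding fe jth_def using r s t NN0 by (intro has_sum_cmult_right jtheta2_Ef) auto
  then show ?thesis using H by (rule has_sum_unique[symmetric])
qed

lemma sum_zero: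
  fixes f :: "int \<Rightarrow> complex"
  assumes H: "(f has_sum I) UNIV" and fe: "\<And>m. f m = 0"
  shows "I = 0"
proof -
  have "(f has_sum 0) UNIV" using fe by (intro has_sum_0) auto
  then show ?thesis using has_sum_unique[OF H] by blast
qed

lemma kind_C:
  assumes r: "r > 0" and s: "s > 0" and t: "t > 0" and NN: "NN = of_int N0" and N0: "N0 > 0"
    and d1: "J - J' = of_int d1" "\<bar>d1\<bar> < N0" and d2: "J + J' = of_int d2" "0 < d2" "d2 < N0"
  shows "integral {0..pi * r} (\<lambda>x. cnj (ThF ThC NN J r s x) * ThF ThC NN J' r t x)
       = (if J = J' then complex_of_real (2 * pi * r) * jth NN J r (s + t) else 0)"
proof -
  have NN0: "NN \<noteq> 0" using NN N0 by simp
  have r0: "r \<noteq> 0" using r by simp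
  have H: "((\<lambda>m. (2 * \<i>) * complex_of_real (Ef r t NN J' m) * (complex_of_real (pi * r / 2) *
            ((if d1 = 0 then cnj ((2 * \<i>) * complex_of_real (Ef r s NN J m)) else 0)
             - (if d2 = 0 then cnj ((2 * \<i>) * complex_of_real (Ef r s NN J (1 - m))) else 0))))
          has_sum integral {0..pi * r} (\<lambda>x. cnj (ThF ThC NN J r s x) * ThF ThC NN J' r t x)) UNIV"
  proof (rule gram_sin_kind[OF r s t NN N0 d1 d2(1) _ d2(3)])
    show "((\<lambda>n. (2 * \<i>) * complex_of_real (Ef r s NN J n) * complex_of_real (sin (x * wf NN J n / r))) has_sum ThF ThC NN J r s x) UNIV" for x
      unfolding ThF_def by (rule Theta_C_series[OF NN0 r0 s])
    show "((\<lambda>n. (2 * \<i>) * complex_of_real (Ef r t NN J' n) * complex_of_real (sin (x * wf NN J' n / r))) has_sum ThF ThC NN J' r t x) UNIV" for x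
      unfolding ThF_def by (rule Theta_C_series[OF NN0 r0 t])
  qed (use d2(2) in auto)
  have JJ: "J = J' \<longleftrightarrow> d1 = 0" using d1(1) by auto
  show ?thesis
  proof (cases "d1 = 0")
    case True
    then have JJ': "J' = J" using JJ by simp
    have "integral {0..pi * r} (\<lambda>x. cnj (ThF ThC NN J r s x) * ThF ThC NN J' r t x) = complex_of_real (2 * pi * r) * jth NN J r (s + t)"
      by (rule sum_result[OF r s t NN0 H]) (use d2(2) True in \<open>auto simp: JJ' Ef_mult[symmetric] algebra_simps\<close>)
    then show ?thesis using JJ True by simp
  next
    case False
    have "integral {0..pi * r} (\<lambda>x. cnj (ThF ThC NN J r s x) * ThF ThC NN J' r t x) = 0"
      by (rule sum_zero[OF H]) (use d2(2) False in auto)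
    then show ?thesis using JJ False by simp
  qed
qed

lemma sq_sign: "(-1::complex) ^ k * (-1) ^ k = 1"
  by (simp add: power_mult_distrib[symmetric])

lemma kind_B:
  assumes r: "r > 0" and s: "s > 0" and t: "t > 0" and NN: "NN = of_int N0" and N0: "N0 > 0"
    and d1: "J - J' = of_int d1" "\<bar>d1\<bar> < N0" and d2: "J + J' = of_int d2" "0 \<le> d2" "d2 < N0"
    and J0: "J \<ge> 0" "J' \<ge> 0"
  shows "integral {0..pi * r} (\<lambda>x. cnj (ThF ThB NN J r s x) * ThF ThB NN J' r t x)
       = (if J = J' then complex_of_real ((if J = 0 then 4 else 2) * pi * r) * jth NN J r (s + t) else 0)"
proof -
  have NN0: "NN \<noteq> 0" using NN N0 by simp
  have r0: "r \<noteq> 0" using r by simp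
  define k where "k n = - 2 * (-1::complex) ^ nat \<bar>n\<bar>" for n :: int
  have kn: "norm (k n) \<le> 2" for n by (simp add: k_def norm_mult norm_power)
  have H: "((\<lambda>m. k m * complex_of_real (Ef r t NN J' m) * (complex_of_real (pi * r / 2) *
            ((if d1 = 0 then cnj (k m * complex_of_real (Ef r s NN J m)) else 0)
             - (if d2 = 0 then cnj (k (1 - m) * complex_of_real (Ef r s NN J (1 - m))) else 0))))
          has_sum integral {0..pi * r} (\<lambda>x. cnj (ThF ThB NN J r s x) * ThF ThB NN J' r t x)) UNIV"
  proof (rule gram_sin_kind[OF r s t NN N0 d1 d2 kn kn])
    show "((\<lambda>n. k n * complex_of_real (Ef r s NN J n) * complex_of_real (sin (x * wf NN J n / r))) has_sum ThF ThB NN J r s x) UNIV" for x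
      unfolding ThF_def k_def by (rule Theta_B_series[OF NN0 r0 s])
    show "((\<lambda>n. k n * complex_of_real (Ef r t NN J' n) * complex_of_real (sin (x * wf NN J' n / r))) has_sum ThF ThB NN J' r t x) UNIV" for x
      unfolding ThF_def k_def by (rule Theta_B_series[OF NN0 r0 t])
  qed
  have JJ: "J = J' \<longleftrightarrow> d1 = 0" using d1(1) by auto
  have kk: "k m * cnj (k m) = 4" for m by (simp add: k_def sq_sign)
  show ?thesis
  proof (cases "d1 = 0")
    case True
    then have JJ': "J' = J" using JJ by simp
    show ?thesis
    proof (cases "d2 = 0")
      case True
      then have J00: "J = 0" using d2(1) JJ' by simp
      have k1: "k (1 - m) = - k m" for m by (simp add: k_def sign_flip)
      have E1: "Ef r s NN J (1 - m) = Ef r s NN J m" for m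
        by (rule Ef_sym) (simp add: wf_def J00 algebra_simps)
      have "integral {0..pi * r} (\<lambda>x. cnj (ThF ThB NN J r s x) * ThF ThB NN J' r t x) = complex_of_real (4 * pi * r) * jth NN J r (s + t)"
      proof (rule sum_result[OF r s t NN0 H])
        fix m
        have "k m * complex_of_real (Ef r t NN J' m) * (complex_of_real (pi * r / 2) *
            ((if d1 = 0 then cnj (k m * complex_of_real (Ef r s NN J m)) else 0)
             - (if d2 = 0 then cnj (k (1 - m) * complex_of_real (Ef r s NN J (1 - m))) else 0)))
          = (k m * cnj (k m)) * complex_of_real (pi * r) * complex_of_real (Ef r s NN J m * Ef r t NN J m)"
          using \<open>d1 = 0\<close> \<open>d2 = 0\<close> by (simp add: JJ' k1 E1 algebra_simps)
        also have "\<dots> = complex_of_real (4 * pi * r) * complex_of_real (Ef r (s + t) NN J m)"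
          by (simp add: kk Ef_mult)
        finally show "k m * complex_of_real (Ef r t NN J' m) * (complex_of_real (pi * r / 2) *
            ((if d1 = 0 then cnj (k m * complex_of_real (Ef r s NN J m)) else 0)
             - (if d2 = 0 then cnj (k (1 - m) * complex_of_real (Ef r s NN J (1 - m))) else 0)))
          = complex_of_real (4 * pi * r) * complex_of_real (Ef r (s + t) NN J m)" .
      qed
      then show ?thesis using JJ' J00 by simp
    next
      case False
      then have J00: "J \<noteq> 0" using d2(1) JJ' by auto
      have "integral {0..pi * r} (\<lambda>x. cnj (ThF ThB NN J r s x) * ThF ThB NN J' r t x) = complex_of_real (2 * pi * r) * jth NN J r (s + t)"
      proof (rule sum_result[OF r s t NN0 H])
        fix m
        have "k m * complex_of_real (Ef r t NN J' m) * (complex_of_real (pi * r / 2) *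
            ((if d1 = 0 then cnj (k m * complex_of_real (Ef r s NN J m)) else 0)
             - (if d2 = 0 then cnj (k (1 - m) * complex_of_real (Ef r s NN J (1 - m))) else 0)))
          = (k m * cnj (k m)) * complex_of_real (pi * r / 2) * complex_of_real (Ef r s NN J m * Ef r t NN J m)"
          using \<open>d1 = 0\<close> \<open>d2 \<noteq> 0\<close> by (simp add: JJ' algebra_simps)
        also have "\<dots> = complex_of_real (2 * pi * r) * complex_of_real (Ef r (s + t) NN J m)"
          by (simp add: kk Ef_mult)
        finally show "k m * complex_of_real (Ef r t NN J' m) * (complex_of_real (pi * r / 2) *
            ((if d1 = 0 then cnj (k m * complex_of_real (Ef r s NN J m)) else 0)
             - (if d2 = 0 then cnj (k (1 - m) * complex_of_real (Ef r s NN J (1 - m))) else 0)))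
          = complex_of_real (2 * pi * r) * complex_of_real (Ef r (s + t) NN J m)" .
      qed
      then show ?thesis using JJ' J00 by simp
    qed
  next
    case False
    have "d2 \<noteq> 0"
    proof
      assume "d2 = 0"
      then have "J = 0" "J' = 0" using d2(1) J0 by auto
      then show False using False d1(1) by simp
    qed
    have "integral {0..pi * r} (\<lambda>x. cnj (ThF ThB NN J r s x) * ThF ThB NN J' r t x) = 0"
      by (rule sum_zero[OF H]) (use \<open>d2 \<noteq> 0\<close> False in auto)
    then show ?thesis using JJ False by simp
  qed
qed

lemma kind_D:
  assumes r: "r > 0" and s: "s > 0" and t: "t > 0" and NN: "NN = of_int N0" and N0: "N0 > 0"
    and d1: "J - J' = of_int d1" "\<bar>d1\<bar> < N0" and d2: "J + J' = of_int d2" "0 \<le> d2" "d2 \<le> N0"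
    and J0: "J \<ge> 0" "J' \<ge> 0" "2 * J \<le> NN" "2 * J' \<le> NN"
  shows "integral {0..pi * r} (\<lambda>x. cnj (ThF ThD NN J r s x) * ThF ThD NN J' r t x)
       = (if J = J' then complex_of_real ((if J = 0 \<or> 2 * J = NN then 4 else 2) * pi * r) * jth NN J r (s + t) else 0)"
proof -
  have NN0: "NN \<noteq> 0" using NN N0 by simp
  have r0: "r \<noteq> 0" using r by simp
  define k where "k (n::int) = (2::complex)" for n
  have kn: "norm (k n) \<le> 2" for n by (simp add: k_def)
  have H: "((\<lambda>m. k m * complex_of_real (Ef r t NN J' m) * (complex_of_real (pi * r / 2) *
            ((if d1 = 0 then cnj (k m * complex_of_real (Ef r s NN J m)) else 0)
             + (if d2 = 0 then cnj (k (1 - m) * complex_of_real (Ef r s NN J (1 - m))) else 0)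
             + (if d2 = N0 then cnj (k (- m) * complex_of_real (Ef r s NN J (- m))) else 0))))
          has_sum integral {0..pi * r} (\<lambda>x. cnj (ThF ThD NN J r s x) * ThF ThD NN J' r t x)) UNIV"
  proof (rule gram_cos_kind[OF r s t NN N0 d1 d2 kn kn])
    show "((\<lambda>n. k n * complex_of_real (Ef r s NN J n) * complex_of_real (cos (x * wf NN J n / r))) has_sum ThF ThD NN J r s x) UNIV" for x
      unfolding ThF_def k_def by (rule Theta_D_series[OF NN0 r0 s])
    show "((\<lambda>n. k n * complex_of_real (Ef r t NN J' n) * complex_of_real (cos (x * wf NN J' n / r))) has_sum ThF ThD NN J' r t x) UNIV" for x
      unfolding ThF_def k_def by (rule Theta_D_series[OF NN0 r0 t])
  qed
  have JJ: "J = J' \<longleftrightarrow> d1 = 0" using d1(1) by auto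
  have d2N: "d2 = 0 \<Longrightarrow> d2 \<noteq> N0" using N0 by auto
  show ?thesis
  proof (cases "d1 = 0")
    case True
    then have JJ': "J' = J" using JJ by simp
    have d2J: "real_of_int d2 = 2 * J" using d2(1) JJ' by simp
    show ?thesis
    proof (cases "d2 = 0 \<or> d2 = N0")
      case True
      have E1: "Ef r s NN J (if d2 = 0 then 1 - m else - m) = Ef r s NN J m" for m
      proof (rule Ef_sym)
        show "wf NN J (if d2 = 0 then 1 - m else - m) = - wf NN J m"
        proof (cases "d2 = 0")
          case True
          then have "J = 0" using d2J by simp
          then show ?thesis using True by (simp add: wf_def algebra_simps)
        next
          case False
          then have "d2 = N0" using \<open>d2 = 0 \<or> d2 = N0\<close> by simp
          then have "2 * J = NN" using d2J NN by simp
          then show ?thesis using False by (simp add: wf_def algebra_simps)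
        qed
      qed
      have c4: "J = 0 \<or> 2 * J = NN" using True d2J NN by auto
      have "integral {0..pi * r} (\<lambda>x. cnj (ThF ThD NN J r s x) * ThF ThD NN J' r t x) = complex_of_real (4 * pi * r) * jth NN J r (s + t)"
      proof (rule sum_result[OF r s t NN0 H])
        fix m
        have E1': "(if d2 = 0 then Ef r s NN J (1 - m) else 0) + (if d2 = N0 then Ef r s NN J (- m) else 0) = Ef r s NN J m"
          using E1[of m] True d2N by (auto split: if_splits)
        have "k m * complex_of_real (Ef r t NN J' m) * (complex_of_real (pi * r / 2) *
            ((if d1 = 0 then cnj (k m * complex_of_real (Ef r s NN J m)) else 0)
             + (if d2 = 0 then cnj (k (1 - m) * complex_of_real (Ef r s NN J (1 - m))) else 0)
             + (if d2 = N0 then cnj (k (- m) * complex_of_real (Ef r s NN J (- m))) else 0)))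
          = 2 * complex_of_real (Ef r t NN J m) * (complex_of_real (pi * r / 2) *
            (2 * complex_of_real (Ef r s NN J m) + 2 * complex_of_real ((if d2 = 0 then Ef r s NN J (1 - m) else 0) + (if d2 = N0 then Ef r s NN J (- m) else 0))))"
          using \<open>d1 = 0\<close> by (simp add: JJ' k_def)
        also have "\<dots> = complex_of_real (4 * pi * r) * complex_of_real (Ef r (s + t) NN J m)"
          unfolding E1' by (simp add: Ef_mult[symmetric] algebra_simps)
        finally show "k m * complex_of_real (Ef r t NN J' m) * (complex_of_real (pi * r / 2) *
            ((if d1 = 0 then cnj (k m * complex_of_real (Ef r s NN J m)) else 0)
             + (if d2 = 0 then cnj (k (1 - m) * complex_of_real (Ef r s NN J (1 - m))) else 0)
             + (if d2 = N0 then cnj (k (- m) * complex_of_real (Ef r s NN J (- m))) else 0)))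
          = complex_of_real (4 * pi * r) * complex_of_real (Ef r (s + t) NN J m)" .
      qed
      then show ?thesis using JJ' c4 by simp
    next
      case False
      have c2: "\<not> (J = 0 \<or> 2 * J = NN)" using False d2J NN by auto
      have "integral {0..pi * r} (\<lambda>x. cnj (ThF ThD NN J r s x) * ThF ThD NN J' r t x) = complex_of_real (2 * pi * r) * jth NN J r (s + t)"
      proof (rule sum_result[OF r s t NN0 H])
        fix m
        have "k m * complex_of_real (Ef r t NN J' m) * (complex_of_real (pi * r / 2) *
            ((if d1 = 0 then cnj (k m * complex_of_real (Ef r s NN J m)) else 0)
             + (if d2 = 0 then cnj (k (1 - m) * complex_of_real (Ef r s NN J (1 - m))) else 0)
             + (if d2 = N0 then cnj (k (- m) * complex_of_real (Ef r s NN J (- m))) else 0)))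
          = 2 * complex_of_real (Ef r t NN J m) * (complex_of_real (pi * r / 2) * (2 * complex_of_real (Ef r s NN J m)))"
          using \<open>d1 = 0\<close> False by (simp add: JJ' k_def)
        also have "\<dots> = complex_of_real (2 * pi * r) * complex_of_real (Ef r (s + t) NN J m)"
          by (simp add: Ef_mult[symmetric] algebra_simps)
        finally show "k m * complex_of_real (Ef r t NN J' m) * (complex_of_real (pi * r / 2) *
            ((if d1 = 0 then cnj (k m * complex_of_real (Ef r s NN J m)) else 0)
             + (if d2 = 0 then cnj (k (1 - m) * complex_of_real (Ef r s NN J (1 - m))) else 0)
             + (if d2 = N0 then cnj (k (- m) * complex_of_real (Ef r s NN J (- m))) else 0)))
          = complex_of_real (2 * pi * r) * complex_of_real (Ef r (s + t) NN J m)" .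
      qed
      then show ?thesis using JJ' c2 by simp
    qed
  next
    case False
    have "d2 \<noteq> 0"
    proof
      assume "d2 = 0"
      then have "J = 0" "J' = 0" using d2(1) J0 by auto
      then show False using False d1(1) by simp
    qed
    moreover have "d2 \<noteq> N0"
    proof
      assume "d2 = N0"
      then have "J + J' = NN" using d2(1) NN by simp
      then have "J = J'" using J0 by linarith
      then show False using False JJ by simp
    qed
    ultimately have "integral {0..pi * r} (\<lambda>x. cnj (ThF ThD NN J r s x) * ThF ThD NN J' r t x) = 0"
      by (intro sum_zero[OF H]) (use False in auto)
    then show ?thesis using JJ False by simp
  qed
qed

lemma kind_A:
  assumes r: "r > 0" and s: "s > 0" and t: "t > 0" and NN: "NN = of_int N0" and N0: "N0 > 0"
    and d1: "J - J' = of_int d1" "\<bar>d1\<bar> < N0"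
  shows "integral {0..2 * pi * r} (\<lambda>x. cnj (ThF ThA NN J r s x) * ThF ThA NN J' r t x)
       = (if J = J' then complex_of_real (2 * pi * r) * jth NN J r (s + t) else 0)"
proof -
  have NN0: "NN \<noteq> 0" using NN N0 by simp
  have r0: "r \<noteq> 0" using r by simp
  have H: "((\<lambda>m. complex_of_real (Ef r t NN J' m) * (if d1 = 0 then cnj (complex_of_real (Ef r s NN J m)) * complex_of_real (2 * pi * r) else 0))
          has_sum integral {0..2 * pi * r} (\<lambda>x. cnj (ThF ThA NN J r s x) * ThF ThA NN J' r t x)) UNIV"
  proof (rule gram_exp_kind[OF r s t NN N0 d1])
    show "((\<lambda>n. complex_of_real (Ef r s NN J n) * exp (\<i> * complex_of_real (x * wf NN J n / r))) has_sum ThF ThA NN J r s x) UNIV" for x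
      unfolding ThF_def by (rule Theta_A_series[OF NN0 r0 s])
    show "((\<lambda>n. complex_of_real (Ef r t NN J' n) * exp (\<i> * complex_of_real (x * wf NN J' n / r))) has_sum ThF ThA NN J' r t x) UNIV" for x
      unfolding ThF_def by (rule Theta_A_series[OF NN0 r0 t])
  qed
  have JJ: "J = J' \<longleftrightarrow> d1 = 0" using d1(1) by auto
  show ?thesis
  proof (cases "d1 = 0")
    case True
    then have JJ': "J' = J" using JJ by simp
    have "integral {0..2 * pi * r} (\<lambda>x. cnj (ThF ThA NN J r s x) * ThF ThA NN J' r t x) = complex_of_real (2 * pi * r) * jth NN J r (s + t)"
      by (rule sum_result[OF r s t NN0 H]) (use True in \<open>simp add: JJ' Ef_mult[symmetric] algebra_simps\<close>)
    then show ?thesis using JJ' by simp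
  next
    case False
    have "integral {0..2 * pi * r} (\<lambda>x. cnj (ThF ThA NN J r s x) * ThF ThA NN J' r t x) = 0"
      by (rule sum_zero[OF H]) (use False in auto)
    then show ?thesis using JJ False by simp
  qed
qed

lemma kind_cont:
  assumes r: "r > 0" and u: "u > 0" and NN0: "NN \<noteq> 0"
  shows "continuous_on {c..d} (ThF k NN J r u)"
proof -
  have r0: "r \<noteq> 0" using r by simp
  show ?thesis
  proof (cases k)
    case ThA
    have sa: "(\<lambda>n. norm ((\<lambda>_. 1::complex) n * complex_of_real (Ef r u NN J n))) summable_on UNIV"
      by (rule norm_summable_Ef[OF r0 u NN0]) simp
    have hs: "((\<lambda>n. (1 * complex_of_real (Ef r u NN J n)) * exp (\<i> * complex_of_real (x * wf NN J n / r))) has_sum ThF ThA NN J r u x) UNIV"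
      if "x \<in> {c..d}" for x
      unfolding ThF_def mult_1 by (rule Theta_A_series[OF NN0 r0 u])
    show ?thesis unfolding ThA
      by (rule series_cont[OF sa _ _ hs]) (use r0 in \<open>auto intro!: continuous_intros simp: norm_exp_i_times\<close>)
  next
    case ThB
    have sa: "(\<lambda>n. norm ((\<lambda>n. - 2 * (-1::complex) ^ nat \<bar>n\<bar>) n * complex_of_real (Ef r u NN J n))) summable_on UNIV"
      by (rule norm_summable_Ef[OF r0 u NN0]) (simp add: norm_mult norm_power)
    have hs: "(((\<lambda>n. (- 2 * (-1::complex) ^ nat \<bar>n\<bar>) * complex_of_real (Ef r u NN J n) * complex_of_real (sin (x * wf NN J n / r)))) has_sum ThF ThB NN J r u x) UNIV"
      if "x \<in> {c..d}" for x
      unfolding ThF_def by (rule Theta_B_series[OF NN0 r0 u])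
    show ?thesis unfolding ThB
      by (rule series_cont[OF sa _ _ hs]) (use r0 in \<open>auto intro!: continuous_intros simp: abs_sin_le_one\<close>)
  next
    case ThC
    have sa: "(\<lambda>n. norm ((\<lambda>n. 2 * \<i>) n * complex_of_real (Ef r u NN J n))) summable_on UNIV"
      by (rule norm_summable_Ef[OF r0 u NN0]) (simp add: norm_mult)
    have hs: "(((\<lambda>n. (2 * \<i>) * complex_of_real (Ef r u NN J n) * complex_of_real (sin (x * wf NN J n / r)))) has_sum ThF ThC NN J r u x) UNIV"
      if "x \<in> {c..d}" for x
      unfolding ThF_def by (rule Theta_C_series[OF NN0 r0 u])
    show ?thesis unfolding ThC
      by (rule series_cont[OF sa _ _ hs]) (use r0 in \<open>auto intro!: continuous_intros simp: abs_sin_le_one\<close>)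
  next
    case ThD
    have sa: "(\<lambda>n. norm ((\<lambda>n. 2) n * complex_of_real (Ef r u NN J n))) summable_on UNIV"
      by (rule norm_summable_Ef[OF r0 u NN0]) simp
    have hs: "(((\<lambda>n. 2 * complex_of_real (Ef r u NN J n) * complex_of_real (cos (x * wf NN J n / r)))) has_sum ThF ThD NN J r u x) UNIV"
      if "x \<in> {c..d}" for x
      unfolding ThF_def by (rule Theta_D_series[OF NN0 r0 u])
    show ?thesis unfolding ThD
      by (rule series_cont[OF sa _ _ hs]) (use r0 in \<open>auto intro!: continuous_intros simp: abs_cos_le_one\<close>)
  qed
qed

lemma Mfun_ThF: "Mfun R N r j x u = ThF (sharp R) (calN R N) (Jfun R j) r u x"
  by (simp add: Mfun_def ThF_def)

lemma mconst_jth: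
  assumes "1 \<le> j" "j \<le> N"
  shows "mconst R N r j T = complex_of_real ((if (R \<in> {RB, RBv, RD} \<and> j = 1) \<or> (R = RD \<and> j = N) then 4 else 2) * pi * r)
                             * jth (calN R N) (Jfun R j) r T"
proof -
  consider "R \<in> {RB, RBv, RD} \<and> j = 1" | "\<not> (R \<in> {RB, RBv, RD} \<and> j = 1) \<and> R = RD \<and> j = N"
    | "\<not> (R \<in> {RB, RBv, RD} \<and> j = 1) \<and> \<not> (R = RD \<and> j = N)" by blast
  then show ?thesis
  proof cases
    case 1
    then have "Jfun R j = 0" by auto
    then show ?thesis using 1 by (simp add: mconst_def jth_def Let_def)
  next
    case 2
    then show ?thesis by (auto simp add: mconst_def jth_def Let_def)
  next
    case 3
    then show ?thesis by (auto simp add: mconst_def jth_def Let_def)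
  qed
qed

lemma calN_pos:
  assumes "N \<ge> 1" "R = RD \<Longrightarrow> N \<ge> 2"
  shows "calN R N \<noteq> 0"
  using assms by (cases R) auto

lemma cont_type:
  assumes "N \<ge> 1" "R = RD \<Longrightarrow> N \<ge> 2" "r > 0" "u > 0"
  shows "continuous_on {c..d} (\<lambda>x. Mfun R N r j x u)"
  unfolding Mfun_ThF using kind_cont[OF assms(3,4) calN_pos[OF assms(1,2)]] by (simp add: comp_def)

lemma gram_RA:
  assumes N1: "N \<ge> 1" and r: "r > 0" and s: "s > 0" and t: "t > 0"
    and j: "1 \<le> j" "j \<le> N" and l: "1 \<le> l" "l \<le> N"
  shows "integral {0..2 * pi * r} (\<lambda>x. cnj (Mfun RA N r j x s) * Mfun RA N r l x t)
       = (if j = l then mconst RA N r j (s + t) else 0)"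
proof -
  have jl: "\<bar>int j - int l\<bar> < int N" using j l by auto
  have K: "integral {0..2 * pi * r} (\<lambda>x. cnj (ThF ThA (real N) (real j - 1/2) r s x) * ThF ThA (real N) (real l - 1/2) r t x)
       = (if real j - 1/2 = real l - 1/2 then complex_of_real (2 * pi * r) * jth (real N) (real j - 1/2) r (s + t) else 0)"
    by (rule kind_A[OF r s t _ _ _ jl]) (use N1 in auto)
  show ?thesis using K j by (simp add: Mfun_ThF mconst_jth)
qed

lemma gram_RB:
  assumes N1: "N \<ge> 1" and r: "r > 0" and s: "s > 0" and t: "t > 0"
    and j: "1 \<le> j" "j \<le> N" and l: "1 \<le> l" "l \<le> N"
  shows "integral {0..pi * r} (\<lambda>x. cnj (Mfun RB N r j x s) * Mfun RB N r l x t)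
       = (if j = l then mconst RB N r j (s + t) else 0)"
proof -
  have jl: "\<bar>int j - int l\<bar> < int N" using j l by auto
  have K: "integral {0..pi * r} (\<lambda>x. cnj (ThF ThB (2 * real N - 1) (real j - 1) r s x) * ThF ThB (2 * real N - 1) (real l - 1) r t x)
       = (if real j - 1 = real l - 1 then complex_of_real ((if real j - 1 = 0 then 4 else 2) * pi * r) * jth (2 * real N - 1) (real j - 1) r (s + t) else 0)"
    by (rule kind_B[OF r s t, where ?N0.0 = "2 * int N - 1" and ?d1.0 = "int j - int l" and ?d2.0 = "int j + int l - 2"]) (use N1 j l in auto)
  show ?thesis using K j by (simp add: Mfun_ThF mconst_jth)
qed

lemma gram_RBv:
  assumes N1: "N \<ge> 1" and r: "r > 0" and s: "s > 0" and t: "t > 0"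
    and j: "1 \<le> j" "j \<le> N" and l: "1 \<le> l" "l \<le> N"
  shows "integral {0..pi * r} (\<lambda>x. cnj (Mfun RBv N r j x s) * Mfun RBv N r l x t)
       = (if j = l then mconst RBv N r j (s + t) else 0)"
proof -
  have jl: "\<bar>int j - int l\<bar> < int N" using j l by auto
  have K: "integral {0..pi * r} (\<lambda>x. cnj (ThF ThB (2 * real N) (real j - 1) r s x) * ThF ThB (2 * real N) (real l - 1) r t x)
       = (if real j - 1 = real l - 1 then complex_of_real ((if real j - 1 = 0 then 4 else 2) * pi * r) * jth (2 * real N) (real j - 1) r (s + t) else 0)"
    by (rule kind_B[OF r s t, where ?N0.0 = "2 * int N" and ?d1.0 = "int j - int l" and ?d2.0 = "int j + int l - 2"]) (use N1 j l in auto)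
  show ?thesis using K j by (simp add: Mfun_ThF mconst_jth)
qed

lemma gram_RC:
  assumes N1: "N \<ge> 1" and r: "r > 0" and s: "s > 0" and t: "t > 0"
    and j: "1 \<le> j" "j \<le> N" and l: "1 \<le> l" "l \<le> N"
  shows "integral {0..pi * r} (\<lambda>x. cnj (Mfun RC N r j x s) * Mfun RC N r l x t)
       = (if j = l then mconst RC N r j (s + t) else 0)"
proof -
  have jl: "\<bar>int j - int l\<bar> < int N" using j l by auto
  have K: "integral {0..pi * r} (\<lambda>x. cnj (ThF ThC (2 * (real N + 1)) (real j) r s x) * ThF ThC (2 * (real N + 1)) (real l) r t x)
       = (if real j = real l then complex_of_real (2 * pi * r) * jth (2 * (real N + 1)) (real j) r (s + t) else 0)"
    by (rule kind_C[OF r s t, where ?N0.0 = "2 * int N + 2" and ?d1.0 = "int j - int l" and ?d2.0 = "int j + int l"]) (use N1 j l in auto)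
  show ?thesis using K j by (simp add: Mfun_ThF mconst_jth)
qed

lemma gram_RCv:
  assumes N1: "N \<ge> 1" and r: "r > 0" and s: "s > 0" and t: "t > 0"
    and j: "1 \<le> j" "j \<le> N" and l: "1 \<le> l" "l \<le> N"
  shows "integral {0..pi * r} (\<lambda>x. cnj (Mfun RCv N r j x s) * Mfun RCv N r l x t)
       = (if j = l then mconst RCv N r j (s + t) else 0)"
proof -
  have jl: "\<bar>int j - int l\<bar> < int N" using j l by auto
  have K: "integral {0..pi * r} (\<lambda>x. cnj (ThF ThC (2 * real N) (real j - 1/2) r s x) * ThF ThC (2 * real N) (real l - 1/2) r t x)
       = (if real j - 1/2 = real l - 1/2 then complex_of_real (2 * pi * r) * jth (2 * real N) (real j - 1/2) r (s + t) else 0)"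
    by (rule kind_C[OF r s t, where ?N0.0 = "2 * int N" and ?d1.0 = "int j - int l" and ?d2.0 = "int j + int l - 1"]) (use N1 j l in auto)
  show ?thesis using K j by (simp add: Mfun_ThF mconst_jth)
qed

lemma gram_RBC:
  assumes N1: "N \<ge> 1" and r: "r > 0" and s: "s > 0" and t: "t > 0"
    and j: "1 \<le> j" "j \<le> N" and l: "1 \<le> l" "l \<le> N"
  shows "integral {0..pi * r} (\<lambda>x. cnj (Mfun RBC N r j x s) * Mfun RBC N r l x t)
       = (if j = l then mconst RBC N r j (s + t) else 0)"
proof -
  have jl: "\<bar>int j - int l\<bar> < int N" using j l by auto
  have K: "integral {0..pi * r} (\<lambda>x. cnj (ThF ThC (2 * real N + 1) (real j) r s x) * ThF ThC (2 * real N + 1) (real l) r t x)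
       = (if real j = real l then complex_of_real (2 * pi * r) * jth (2 * real N + 1) (real j) r (s + t) else 0)"
    by (rule kind_C[OF r s t, where ?N0.0 = "2 * int N + 1" and ?d1.0 = "int j - int l" and ?d2.0 = "int j + int l"]) (use N1 j l in auto)
  show ?thesis using K j by (simp add: Mfun_ThF mconst_jth)
qed

lemma gram_RD:
  assumes N1: "N \<ge> 1" and N2: "N \<ge> 2" and r: "r > 0" and s: "s > 0" and t: "t > 0"
    and j: "1 \<le> j" "j \<le> N" and l: "1 \<le> l" "l \<le> N"
  shows "integral {0..pi * r} (\<lambda>x. cnj (Mfun RD N r j x s) * Mfun RD N r l x t)
       = (if j = l then mconst RD N r j (s + t) else 0)"
proof -
  have jl: "\<bar>int j - int l\<bar> < int N" using j l by auto
  have K: "integral {0..pi * r} (\<lambda>x. cnj (ThF ThD (2 * (real N - 1)) (real j - 1) r s x) * ThF ThD (2 * (real N - 1)) (real l - 1) r t x)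
       = (if real j - 1 = real l - 1 then complex_of_real ((if real j - 1 = 0 \<or> 2 * (real j - 1) = 2 * (real N - 1) then 4 else 2) * pi * r) * jth (2 * (real N - 1)) (real j - 1) r (s + t) else 0)"
    by (rule kind_D[OF r s t, where ?N0.0 = "2 * int N - 2" and ?d1.0 = "int j - int l" and ?d2.0 = "int j + int l - 2"]) (use N2 j l in auto)
  show ?thesis using K j by (simp add: Mfun_ThF mconst_jth)
qed
lemma gram_type:
  assumes N1: "N \<ge> 1" and ND: "R = RD \<Longrightarrow> N \<ge> 2" and r: "r > 0" and s: "s > 0" and t: "t > 0"
    and j: "1 \<le> j" "j \<le> N" and l: "1 \<le> l" "l \<le> N"
  shows "integral {0..(if R = RA then 2 * pi * r else pi * r)} (\<lambda>x. cnj (Mfun R N r j x s) * Mfun R N r l x t)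
       = (if j = l then mconst R N r j (s + t) else 0)"
proof (cases R)
  case RA then show ?thesis using gram_RA[OF N1 r s t j l] by simp
next
  case RB then show ?thesis using gram_RB[OF N1 r s t j l] by simp
next
  case RBv then show ?thesis using gram_RBv[OF N1 r s t j l] by simp
next
  case RC then show ?thesis using gram_RC[OF N1 r s t j l] by simp
next
  case RCv then show ?thesis using gram_RCv[OF N1 r s t j l] by simp
next
  case RBC then show ?thesis using gram_RBC[OF N1 r s t j l] by simp
next
  case RD then show ?thesis using gram_RD[OF N1 ND[OF RD] r s t j l] by simp
qed

lemma weyl_eq:
  assumes N1: "N \<ge> 1"
  shows "(if R = RA then weyl_A N r else weyl_half N r) = wch N (if R = RA then {0..<2 * pi * r} else {0..pi * r})"
proof -
  have A: "weyl_A N r = wch N {0..<2 * pi * r}"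
  proof (intro equalityI subsetI)
    fix x assume "x \<in> weyl_A N r"
    then have x: "0 \<le> x 0" "\<And>k. Suc k < N \<Longrightarrow> x k < x (Suc k)" "x (N - 1) < 2 * pi * r"
      by (auto simp: weyl_A_def)
    have "x k \<in> {0..<2 * pi * r}" if "k < N" for k
    proof -
      have k1: "k \<le> N - 1" "N - 1 < N" using that by auto
      have "x 0 \<le> x k" using chain_le[of N x 0 k] x(2) that by blast
      moreover have "x k \<le> x (N - 1)" using chain_le[of N x k "N - 1"] x(2) k1 by blast
      ultimately show ?thesis using x by auto
    qed
    then show "x \<in> wch N {0..<2 * pi * r}" using x by (auto simp: wch_def)
  next
    fix x assume "x \<in> wch N {0..<2 * pi * r}"
    then show "x \<in> weyl_A N r" using N1 by (auto simp: wch_def weyl_A_def)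
  qed
  have H: "weyl_half N r = wch N {0..pi * r}"
  proof (intro equalityI subsetI)
    fix x assume "x \<in> weyl_half N r"
    then have x: "0 \<le> x 0" "\<And>k. Suc k < N \<Longrightarrow> x k < x (Suc k)" "x (N - 1) \<le> pi * r"
      by (auto simp: weyl_half_def)
    have "x k \<in> {0..pi * r}" if "k < N" for k
    proof -
      have k1: "k \<le> N - 1" "N - 1 < N" using that by auto
      have "x 0 \<le> x k" using chain_le[of N x 0 k] x(2) that by blast
      moreover have "x k \<le> x (N - 1)" using chain_le[of N x k "N - 1"] x(2) k1 by blast
      ultimately show ?thesis using x by auto
    qed
    then show "x \<in> wch N {0..pi * r}" using x by (auto simp: wch_def)
  next
    fix x assume "x \<in> wch N {0..pi * r}"
    then show "x \<in> weyl_half N r" using N1 by (auto simp: wch_def weyl_half_def)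
  qed
  show ?thesis using A H by simp
qed

theorem lemma3p2:
  fixes R :: rtype and N :: nat and r ts t :: real
  assumes "N \<ge> 1" and "R = RD \<Longrightarrow> N \<ge> 2"
    and "r > 0" and "0 < ts" and "0 < t" and "t < ts"
  shows "(LINT x : (if R = RA then weyl_A N r else weyl_half N r) | PiM {..<N} (\<lambda>_. lborel).
            qdens R N r ts t x)
         = (\<Prod>n = 1..N. mconst R N r n ts)"
proof -
  note N1 = assms(1) and ND = assms(2) and r = assms(3)
  have s: "ts - t > 0" using assms by simp
  have t: "t > 0" using assms by simp
  define L where "L = (if R = RA then 2 * pi * r else pi * r)"
  define S where "S = (if R = RA then {0..<2 * pi * r} else {0..pi * r})"
  define f where "f j y = Mfun R N r (Suc j) y (ts - t)" for j y
  define g where "g j y = Mfun R N r (Suc j) y t" for j y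
  have Ssub: "S \<subseteq> {0..L}" by (auto simp: S_def L_def)
  have Smeas[measurable]: "S \<in> sets borel" by (simp add: S_def)
  have cont: "continuous_on {0..L} (\<lambda>y. cnj (f a y) * g b y)" for a b
    unfolding f_def g_def by (intro continuous_intros cont_type[OF N1 ND r s] cont_type[OF N1 ND r t])
  have si: "set_integrable lborel {0..L} (\<lambda>y. cnj (f a y) * g b y)" for a b
    by (rule borel_integrable_atLeastAtMost'[OF cont])
  have siS: "set_integrable lborel S (\<lambda>y. cnj (f a y) * g b y)" for a b
    by (rule set_integrable_subset[OF si[of a b] _ Ssub]) simp
  have val: "(LINT y:S|lborel. cnj (f a y) * g b y) = integral {0..L} (\<lambda>y. cnj (f a y) * g b y)" for a b
  proof -
    have "(LINT y:S|lborel. cnj (f a y) * g b y) = (LINT y:{0..L}|lborel. cnj (f a y) * g b y)"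
    proof (cases "R = RA")
      case True
      have "AE y in lborel. (y \<in> {0..L}) = (y \<in> S)"
        using AE_lborel_singleton[of L] by eventually_elim (auto simp: S_def L_def True)
      then show ?thesis
        by (intro set_integral_cong_set)
           (use si[of a b] siS[of a b] in \<open>auto simp: set_integrable_def set_borel_measurable_def\<close>)
    next
      case False
      then show ?thesis by (simp add: S_def L_def)
    qed
    also have "\<dots> = integral {0..L} (\<lambda>y. cnj (f a y) * g b y)"
      by (rule set_borel_integral_eq_integral(2)[OF si])
    finally show ?thesis .
  qed
  have gram: "integral {0..L} (\<lambda>y. cnj (f a y) * g b y) = (if a = b then mconst R N r (Suc a) ts else 0)"
    if "a < N" "b < N" for a b
    using gram_type[OF N1 ND r s t, where j="Suc a" and l="Suc b"] that assms(6) by (simp add: L_def f_def g_def)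
  have qd: "qdens R N r ts t x = Qdet N (\<lambda>j y. cnj (f j y)) x * Qdet N g x" for x
    unfolding qdens_def Qdet_def f_def g_def
    by (simp add: det_cols_rows[of N "\<lambda>j k. cnj (Mfun R N r (Suc j) (x k) (ts - t))"]
                  det_cols_rows[of N "\<lambda>j k. Mfun R N r (Suc j) (x k) t"])
  have "(LINT x : (if R = RA then weyl_A N r else weyl_half N r) | PiM {..<N} (\<lambda>_. lborel). qdens R N r ts t x)
      = (\<integral>x. indicator (wch N S) x *\<^sub>R (Qdet N (\<lambda>j y. cnj (f j y)) x * Qdet N g x) \<partial>PM N)"
    unfolding set_lebesgue_integral_def weyl_eq[OF N1] S_def[symmetric] qd ..
  also have "\<dots> = (\<Prod>j<N. \<integral>y. indicator S y *\<^sub>R (cnj (f j y) * g j y) \<partial>lborel)"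
  proof (rule andreief[OF Smeas])
    show "integrable lborel (\<lambda>y. indicator S y *\<^sub>R (cnj (f a y) * g b y))" for a b
      using siS[of a b] by (simp add: set_integrable_def)
    show "(\<integral>y. indicator S y *\<^sub>R (cnj (f a y) * g b y) \<partial>lborel) = 0" if "a < N" "b < N" "a \<noteq> b" for a b
      using val[of a b] gram[OF that(1,2)] that(3) by (simp add: set_lebesgue_integral_def)
  qed
  also have "\<dots> = (\<Prod>j<N. mconst R N r (Suc j) ts)"
    using val gram by (intro prod.cong refl) (simp add: set_lebesgue_integral_def)
  also have "\<dots> = (\<Prod>n = 1..N. mconst R N r n ts)"
    using prod.atLeast1_atMost_eq[of "\<lambda>n. mconst R N r n ts" N] by simp
  finally show ?thesis .
qed

end
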